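(* Let $X$ be a sequentially complete Hausdorff locally convex vector space and let $x(\cdot):[a,b]\to X$ have weakly compact semivariation on $[a,b]$. Then for every continuous $g:[a,b]\to\mathbb{C}$ the integral $\int_a^b g(t)\,dx(t)$ exists in $X$.
   Context: For $a\le b$ let $E(a,b)=\{\sum_{i=1}^n[x(t_{2i})-x(t_{2i-1})] : n\ge1,\ a\le t_1<t_2<\dots<t_{2n}\le b\}$. The function $x(\cdot)$ has weakly compact semivariation on $[a,b]$ if $E(a,b)$ is relatively weakly compact in $X$ (weak topology $\sigma(X,X')$, $X'$ the topological dual). The integral $\int_a^b g\,dx$ is the limit in the topology of $X$, as the mesh $d=\max_i|t_i-t_{i-1}|\to0$, of the Riemann–Stieltjes sums $\sum_{i=1}^n g(s_i)[x(t_i)-x(t_{i-1})]$ over tagged divisions $a=t_0\le\dots\le t_n=b$, $s_i\in[t_{i-1},t_i]$. *)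

theory Defs
  imports "HOL-Analysis.Analysis"
begin

text \<open>A complex topological vector space is modelled by a type 'x carrying the
(Hausdorff) topology of the type class, an additive group structure, and a
complex scalar multiplication sm making it a complex vector space
(locale Vector_Spaces.vector_space), such that addition and scalar
multiplication are jointly continuous.\<close>

definition complex_tvs :: "(complex \<Rightarrow> 'x::{ab_group_add,topological_space} \<Rightarrow> 'x) \<Rightarrow> bool" where
  "complex_tvs sm \<longleftrightarrow>
     Vector_Spaces.vector_space sm \<and>
     continuous_on UNIV (\<lambda>p::'x \<times> 'x. fst p + snd p) \<and>
     continuous_on UNIV (\<lambda>p::complex \<times> 'x. sm (fst p) (snd p))"

definition cconvex :: "(complex \<Rightarrow> 'x::ab_group_add \<Rightarrow> 'x) \<Rightarrow> 'x set \<Rightarrow> bool" where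
  "cconvex sm C \<longleftrightarrow>
     (\<forall>x\<in>C. \<forall>y\<in>C. \<forall>u::real. 0 \<le> u \<and> u \<le> 1 \<longrightarrow>
        sm (complex_of_real u) x + sm (complex_of_real (1 - u)) y \<in> C)"

definition locally_convex :: "(complex \<Rightarrow> 'x::{ab_group_add,topological_space} \<Rightarrow> 'x) \<Rightarrow> bool" where
  "locally_convex sm \<longleftrightarrow>
     (\<forall>U. open U \<and> 0 \<in> U \<longrightarrow> (\<exists>V. open V \<and> 0 \<in> V \<and> V \<subseteq> U \<and> cconvex sm V))"

definition tvs_cauchy :: "(nat \<Rightarrow> 'x::{ab_group_add,topological_space}) \<Rightarrow> bool" where
  "tvs_cauchy u \<longleftrightarrow>
     (\<forall>U. open U \<and> 0 \<in> U \<longrightarrow> (\<exists>N. \<forall>m\<ge>N. \<forall>n\<ge>N. u m - u n \<in> U))"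

definition seq_complete_tvs :: "'x::{ab_group_add,topological_space} itself \<Rightarrow> bool" where
  "seq_complete_tvs _ \<longleftrightarrow> (\<forall>u::nat \<Rightarrow> 'x. tvs_cauchy u \<longrightarrow> (\<exists>l. u \<longlonglongrightarrow> l))"

definition topdual :: "(complex \<Rightarrow> 'x::{ab_group_add,topological_space} \<Rightarrow> 'x) \<Rightarrow> ('x \<Rightarrow> complex) set" where
  "topdual sm = {f. Vector_Spaces.linear sm (*) f \<and> continuous_on UNIV f}"

definition weak_topology :: "(complex \<Rightarrow> 'x::{ab_group_add,topological_space} \<Rightarrow> 'x) \<Rightarrow> 'x topology" where
  "weak_topology sm = topology_generated_by {f -` V | f V. f \<in> topdual sm \<and> open V}"

definition Eset :: "(real \<Rightarrow> 'x::ab_group_add) \<Rightarrow> real \<Rightarrow> real \<Rightarrow> 'x set" where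
  "Eset x a b = {(\<Sum>i\<in>{1..n}. x (t (2*i)) - x (t (2*i - 1))) | n t.
       n \<ge> 1 \<and> a \<le> t 1 \<and> (\<forall>i\<in>{1..<2*n}. t i < t (Suc i)) \<and> t (2*n) \<le> b}"

definition weakly_compact_semivariation ::
  "(complex \<Rightarrow> 'x::{ab_group_add,topological_space} \<Rightarrow> 'x) \<Rightarrow> (real \<Rightarrow> 'x) \<Rightarrow> real \<Rightarrow> real \<Rightarrow> bool" where
  "weakly_compact_semivariation sm x a b \<longleftrightarrow>
     compactin (weak_topology sm) ((weak_topology sm) closure_of (Eset x a b))"

text \<open>Tagged division a = t 0 \<le> ... \<le> t n = b with tags s i \<in> [t i, t (i+1)], i < n
  (index shifted by one relative to the paper), and its mesh bound.\<close>
definition tagged_div :: "real \<Rightarrow> real \<Rightarrow> nat \<Rightarrow> (nat \<Rightarrow> real) \<Rightarrow> (nat \<Rightarrow> real) \<Rightarrow> bool" where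
  "tagged_div a b n t s \<longleftrightarrow> t 0 = a \<and> t n = b \<and>
     (\<forall>i<n. t i \<le> t (Suc i) \<and> t i \<le> s i \<and> s i \<le> t (Suc i))"

definition mesh :: "nat \<Rightarrow> (nat \<Rightarrow> real) \<Rightarrow> real" where
  "mesh n t = Max (insert 0 {\<bar>t (Suc i) - t i\<bar> | i. i < n})"

definition RS_sum :: "(complex \<Rightarrow> 'x::ab_group_add \<Rightarrow> 'x) \<Rightarrow> (real \<Rightarrow> complex) \<Rightarrow> (real \<Rightarrow> 'x)
     \<Rightarrow> nat \<Rightarrow> (nat \<Rightarrow> real) \<Rightarrow> (nat \<Rightarrow> real) \<Rightarrow> 'x" where
  "RS_sum sm g x n t s = (\<Sum>i<n. sm (g (s i)) (x (t (Suc i)) - x (t i)))"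

definition has_RS_integral ::
  "(complex \<Rightarrow> 'x::{ab_group_add,topological_space} \<Rightarrow> 'x) \<Rightarrow> (real \<Rightarrow> complex) \<Rightarrow> (real \<Rightarrow> 'x)
     \<Rightarrow> real \<Rightarrow> real \<Rightarrow> 'x \<Rightarrow> bool" where
  "has_RS_integral sm g x a b I \<longleftrightarrow>
     (\<forall>U. open U \<and> I \<in> U \<longrightarrow>
        (\<exists>\<delta>>0. \<forall>n t s. tagged_div a b n t s \<and> mesh n t < \<delta> \<longrightarrow> RS_sum sm g x n t s \<in> U))"

end

theory Submission
  imports Defs
begin

locale hbl = vector_space sc for sc :: "real \<Rightarrow> 'x::ab_group_add \<Rightarrow> 'x" +
  fixes p :: "'x \<Rightarrow> real"
  assumes p_add: "p (x + y) \<le> p x + p y" and p_scale: "p (sc r x) = \<bar>r\<bar> * p x"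
begin

lemma p_zero: "p 0 = 0"
  using p_scale[of 0 0] by simp

lemma p_nonneg: "p x \<ge> 0"
proof -
  have "p 0 \<le> p x + p (-x)" using p_add[of x "-x"] by simp
  moreover have "p (-x) = p x" using p_scale[of "-1" x] by simp
  ultimately show ?thesis using p_zero by simp
qed

definition good :: "'x \<Rightarrow> ('x \<times> real) set \<Rightarrow> bool" where
"good y0 G \<longleftrightarrow> (\<forall>x a b. (x,a)\<in>G \<longrightarrow> (x,b)\<in>G \<longrightarrow> a = b) \<and>
   (\<forall>x a y b. (x,a)\<in>G \<longrightarrow> (y,b)\<in>G \<longrightarrow> (x+y,a+b)\<in>G) \<and>
   (\<forall>x a r. (x,a)\<in>G \<longrightarrow> (sc r x, r*a)\<in>G) \<and>
   (\<forall>x a. (x,a)\<in>G \<longrightarrow> a \<le> p x) \<and> (y0, p y0) \<in> G"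

lemma good_fun: "good y0 G \<Longrightarrow> (x,a)\<in>G \<Longrightarrow> (x,b)\<in>G \<Longrightarrow> a = b"
  unfolding good_def by blast
lemma good_add: "good y0 G \<Longrightarrow> (x,a)\<in>G \<Longrightarrow> (y,b)\<in>G \<Longrightarrow> (x+y,a+b)\<in>G"
  unfolding good_def by blast
lemma good_sc: "good y0 G \<Longrightarrow> (x,a)\<in>G \<Longrightarrow> (sc r x, r*a)\<in>G"
  unfolding good_def by blast
lemma good_le: "good y0 G \<Longrightarrow> (x,a)\<in>G \<Longrightarrow> a \<le> p x"
  unfolding good_def by blast
lemma good_y0: "good y0 G \<Longrightarrow> (y0, p y0)\<in>G"
  unfolding good_def by blast

lemma good_G0: "good y0 {(sc r y0, r * p y0) | r. True}"
  unfolding good_def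
proof (intro conjI allI impI)
  fix x a b assume "(x,a) \<in> {(sc r y0, r * p y0) | r. True}" "(x,b) \<in> {(sc r y0, r * p y0) | r. True}"
  then obtain r s where rs: "x = sc r y0" "a = r * p y0" "x = sc s y0" "b = s * p y0" by blast
  show "a = b"
  proof (cases "y0 = 0")
    case True then show ?thesis using rs p_zero by simp
  next
    case False then have "r = s" using rs by simp
    then show ?thesis using rs by simp
  qed
next
  fix x a y b assume "(x,a) \<in> {(sc r y0, r * p y0) | r. True}" "(y,b) \<in> {(sc r y0, r * p y0) | r. True}"
  then obtain r s where rs: "x = sc r y0" "a = r * p y0" "y = sc s y0" "b = s * p y0" by auto
  then have "(x+y, a+b) = (sc (r+s) y0, (r+s) * p y0)" by (simp add: scale_left_distrib algebra_simps)
  then show "(x+y, a+b) \<in> {(sc r y0, r * p y0) | r. True}" by blast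
next
  fix x a r assume "(x,a) \<in> {(sc r y0, r * p y0) | r. True}"
  then obtain s where rs: "x = sc s y0" "a = s * p y0" by auto
  then have "(sc r x, r*a) = (sc (r * s) y0, (r * s) * p y0)" by simp
  then show "(sc r x, r*a) \<in> {(sc r y0, r * p y0) | r. True}" by blast
next
  fix x a assume "(x,a) \<in> {(sc r y0, r * p y0) | r. True}"
  then obtain s where rs: "x = sc s y0" "a = s * p y0" by auto
  have "s * p y0 \<le> \<bar>s\<bar> * p y0" using p_nonneg[of y0] by (simp add: mult_right_mono)
  then show "a \<le> p x" using rs p_scale by simp
next
  show "(y0, p y0) \<in> {(sc r y0, r * p y0) | r. True}"
    by (rule CollectI, rule exI[of _ 1], simp)
qed

lemma good_chain:
  assumes "C \<in> chains {G. good y0 G}" "C \<noteq> {}"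
  shows "good y0 (\<Union>C)"
proof -
  have ch: "\<And>G H. G \<in> C \<Longrightarrow> H \<in> C \<Longrightarrow> G \<subseteq> H \<or> H \<subseteq> G"
    using assms(1) unfolding chains_def chain_subset_def by blast
  have gd: "\<And>G. G \<in> C \<Longrightarrow> good y0 G" using assms(1) unfolding chains_def by blast
  have two: "\<And>u v. u \<in> \<Union>C \<Longrightarrow> v \<in> \<Union>C \<Longrightarrow> \<exists>G\<in>C. u \<in> G \<and> v \<in> G"
  proof -
    fix u v assume "u \<in> \<Union>C" "v \<in> \<Union>C"
    then obtain G H where "G \<in> C" "H \<in> C" "u \<in> G" "v \<in> H" by blast
    then show "\<exists>G\<in>C. u \<in> G \<and> v \<in> G" using ch[of G H] by blast
  qed
  obtain G1 where "G1 \<in> C" using assms(2) by blast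
  show ?thesis unfolding good_def
  proof (intro conjI allI impI)
    fix x a b assume "(x,a)\<in>\<Union>C" "(x,b)\<in>\<Union>C"
    then obtain G where "G\<in>C" "(x,a)\<in>G" "(x,b)\<in>G" using two by blast
    then show "a = b" using gd good_fun by blast
  next
    fix x a y b assume "(x,a)\<in>\<Union>C" "(y,b)\<in>\<Union>C"
    then obtain G where "G\<in>C" "(x,a)\<in>G" "(y,b)\<in>G" using two by blast
    then show "(x+y,a+b)\<in>\<Union>C" using gd good_add by blast
  next
    fix x a r assume "(x,a)\<in>\<Union>C"
    then obtain G where "G\<in>C" "(x,a)\<in>G" by blast
    then show "(sc r x, r*a)\<in>\<Union>C" using gd good_sc by blast
  next
    fix x a assume "(x,a)\<in>\<Union>C"
    then obtain G where "G\<in>C" "(x,a)\<in>G" by blast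
    then show "a \<le> p x" using gd good_le by blast
  next
    show "(y0, p y0) \<in> \<Union>C" using good_y0[OF gd[OF \<open>G1 \<in> C\<close>]] \<open>G1 \<in> C\<close> by blast
  qed
qed

lemma good_zero: "good y0 G \<Longrightarrow> (0, 0) \<in> G"
  using good_sc[of y0 G y0 "p y0" 0] good_y0[of y0 G] by simp

lemma good_extend:
  assumes g: "good y0 M" and z: "\<forall>a. (z, a) \<notin> M"
  shows "\<exists>M'. good y0 M' \<and> M \<subseteq> M' \<and> M' \<noteq> M"
proof -
  define D where "D = {x. \<exists>a. (x,a) \<in> M}"
  define h where "h x = (THE a. (x,a) \<in> M)" for x
  have hM: "(x, h x) \<in> M" if xD: "x \<in> D" for x
  proof -
    obtain a where a: "(x,a) \<in> M" using xD D_def by blast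
    have "h x = a" unfolding h_def
      by (rule the_equality, fact a, use g a good_fun in blast)
    then show ?thesis using a by simp
  qed
  have hunique: "(x,a) \<in> M \<Longrightarrow> a = h x" for x a
    using hM[of x] good_fun[OF g] unfolding D_def by blast
  have Dadd: "x \<in> D \<Longrightarrow> y \<in> D \<Longrightarrow> x + y \<in> D" for x y
    using hM good_add[OF g] unfolding D_def by blast
  have Dsc: "x \<in> D \<Longrightarrow> sc r x \<in> D" for x r
    using hM good_sc[OF g] unfolding D_def by blast
  have gadd: "(x,a)\<in>M \<Longrightarrow> (y,b)\<in>M \<Longrightarrow> (x+y,a+b)\<in>M" for x y a b
    using good_add[OF g] by blast
  have gsc: "(x,a)\<in>M \<Longrightarrow> (sc r x, r*a)\<in>M" for x r a
    using good_sc[OF g] by blast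
  have hadd: "x \<in> D \<Longrightarrow> y \<in> D \<Longrightarrow> h (x + y) = h x + h y" for x y
    using hunique[OF gadd[OF hM hM]] by simp
  have hsc: "x \<in> D \<Longrightarrow> h (sc r x) = r * h x" for x r
    using hunique[OF gsc[OF hM]] by simp
  have hp: "x \<in> D \<Longrightarrow> h x \<le> p x" for x
    using hM good_le[OF g] by blast
  have D0: "0 \<in> D" using good_zero[OF g] D_def by blast
  have zD: "z \<notin> D" using z D_def by blast
  have key: "h x1 - p (x1 - z) \<le> p (x2 + z) - h x2" if "x1 \<in> D" "x2 \<in> D" for x1 x2
  proof -
    have "h x1 + h x2 = h (x1 + x2)" using hadd that by simp
    also have "\<dots> \<le> p (x1 + x2)" using hp Dadd that by simp
    also have "\<dots> = p ((x1 - z) + (x2 + z))" by (simp add: algebra_simps)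
    also have "\<dots> \<le> p (x1 - z) + p (x2 + z)" by (rule p_add)
    finally show ?thesis by simp
  qed
  define c where "c = Sup ((\<lambda>x. h x - p (x - z)) ` D)"
  have bdd: "bdd_above ((\<lambda>x. h x - p (x - z)) ` D)"
    using key[OF _ D0] by (intro bdd_aboveI2) auto
  have c1: "h x - p (x - z) \<le> c" if "x \<in> D" for x
    unfolding c_def using bdd that by (intro cSUP_upper)
  have c2: "c \<le> p (x + z) - h x" if "x \<in> D" for x
    unfolding c_def using D0 key[OF _ that] by (intro cSUP_least) auto
  define M' where "M' = {(x + sc r z, h x + r * c) | x r. x \<in> D}"
  have uniq: "x + sc r z = x' + sc r' z \<Longrightarrow> x \<in> D \<Longrightarrow> x' \<in> D \<Longrightarrow> x = x' \<and> r = r'" for x x' r r'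
  proof -
    assume e: "x + sc r z = x' + sc r' z" and xD: "x \<in> D" and x'D: "x' \<in> D"
    have rr: "r = r'"
    proof (rule ccontr)
      assume "r \<noteq> r'"
      have "sc (r' - r) z = x - x'" using e by (simp add: scale_left_diff_distrib algebra_simps)
      then have "sc (1/(r' - r)) (sc (r' - r) z) = sc (1/(r'-r)) (x - x')" by simp
      then have "z = sc (1/(r'-r)) (x + sc (-1) x')" using \<open>r \<noteq> r'\<close> by simp
      moreover have "sc (1/(r'-r)) (x + sc (-1) x') \<in> D" using Dadd Dsc xD x'D by blast
      ultimately show False using zD by simp
    qed
    then show ?thesis using e by simp
  qed
  have hD_neg: "x \<in> D \<Longrightarrow> - x \<in> D" for x using Dsc[of x "-1"] by simp
  have good': "good y0 M'"
    unfolding good_def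
  proof (intro conjI allI impI)
    fix w a b assume "(w,a) \<in> M'" "(w,b) \<in> M'"
    then obtain x r x' r' where "w = x + sc r z" "a = h x + r * c" "x \<in> D"
      "w = x' + sc r' z" "b = h x' + r' * c" "x' \<in> D" unfolding M'_def by blast
    then have "x = x'" "r = r'" using uniq by blast+
    then show "a = b" using \<open>a = h x + r * c\<close> \<open>b = h x' + r' * c\<close> by simp
  next
    fix w a w' b assume "(w,a) \<in> M'" "(w',b) \<in> M'"
    then obtain x r x' r' where e: "w = x + sc r z" "a = h x + r * c" "x \<in> D"
      "w' = x' + sc r' z" "b = h x' + r' * c" "x' \<in> D" unfolding M'_def by blast
    have "(w + w', a + b) = ((x + x') + sc (r + r') z, h (x + x') + (r + r') * c)"
      using e hadd by (simp add: scale_left_distrib algebra_simps)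
    then show "(w + w', a + b) \<in> M'" unfolding M'_def using Dadd e by blast
  next
    fix w a s assume "(w,a) \<in> M'"
    then obtain x r where e: "w = x + sc r z" "a = h x + r * c" "x \<in> D" unfolding M'_def by blast
    have "(sc s w, s * a) = (sc s x + sc (s * r) z, h (sc s x) + (s * r) * c)"
      using e hsc by (simp add: scale_right_distrib algebra_simps)
    then show "(sc s w, s * a) \<in> M'" unfolding M'_def using Dsc e by blast
  next
    fix w a assume "(w,a) \<in> M'"
    then obtain x r where e: "w = x + sc r z" "a = h x + r * c" "x \<in> D" unfolding M'_def by blast
    show "a \<le> p w"
    proof (cases "r = 0")
      case True then show ?thesis using e hp by simp
    next
      case False
      show ?thesis
      proof (cases "r > 0")
        case True
        have xr: "sc (1/r) x \<in> D" using Dsc e by blast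
        have "c \<le> p (sc (1/r) x + z) - h (sc (1/r) x)" using c2[OF xr] .
        then have "r * c \<le> r * (p (sc (1/r) x + z) - h (sc (1/r) x))" using True by simp
        also have "\<dots> = r * p (sc (1/r) x + z) - h x"
          using True hsc[OF e(3), of "1/r"] by (simp add: algebra_simps)
        also have "r * p (sc (1/r) x + z) = p (sc r (sc (1/r) x + z))"
          using True p_scale[of r] by simp
        also have "sc r (sc (1/r) x + z) = w" using True e by (simp add: scale_right_distrib)
        finally show ?thesis using e by simp
      next
        case False
        then have rn: "r < 0" using \<open>r \<noteq> 0\<close> by simp
        define s where "s = - r"
        have s0: "s > 0" using rn s_def by simp
        have xr: "sc (1/s) x \<in> D" using Dsc e by blast
        have "h (sc (1/s) x) - p (sc (1/s) x - z) \<le> c" using c1[OF xr] .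
        then have "s * (h (sc (1/s) x) - p (sc (1/s) x - z)) \<le> s * c" using s0 by simp
        moreover have "s * (h (sc (1/s) x) - p (sc (1/s) x - z)) = h x - s * p (sc (1/s) x - z)"
          using s0 hsc[OF e(3), of "1/s"] by (simp add: algebra_simps)
        moreover have "s * p (sc (1/s) x - z) = p (sc s (sc (1/s) x - z))"
          using s0 p_scale[of s] by simp
        moreover have "sc s (sc (1/s) x - z) = w" using s0 e s_def by (simp add: scale_right_diff_distrib)
        ultimately show ?thesis using e s_def by simp
      qed
    qed
  next
    have "(y0, p y0) \<in> M" using good_y0[OF g] by blast
    then have "y0 \<in> D" "h y0 = p y0" using D_def hunique by auto
    then show "(y0, p y0) \<in> M'" unfolding M'_def by (intro CollectI exI[of _ y0] exI[of _ 0]) simp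
  qed
  have sub: "M \<subseteq> M'"
  proof
    fix u assume "u \<in> M"
    then obtain x a where u: "u = (x,a)" "(x,a) \<in> M" by (cases u) auto
    then have "x \<in> D" "a = h x" using D_def hunique by auto
    then show "u \<in> M'" unfolding M'_def u by (intro CollectI exI[of _ x] exI[of _ 0]) simp
  qed
  have h0: "h 0 = 0" using hsc[OF D0, of 0] by simp
  have "(z, c) \<in> M'" unfolding M'_def using D0 h0 by (intro CollectI exI[of _ 0] exI[of _ 1]) simp
  then have "M' \<noteq> M" using z by blast
  then show ?thesis using good' sub by blast
qed

theorem hahn_banach:
  "\<exists>u. (\<forall>x y. u (x + y) = u x + u y) \<and> (\<forall>r x. u (sc r x) = r * u x) \<and>
       (\<forall>x. \<bar>u x\<bar> \<le> p x) \<and> u y0 = p y0"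
proof -
  have "\<forall>C\<in>chains {G. good y0 G}. \<exists>U\<in>{G. good y0 G}. \<forall>X\<in>C. X \<subseteq> U"
  proof
    fix C assume C: "C \<in> chains {G. good y0 G}"
    show "\<exists>U\<in>{G. good y0 G}. \<forall>X\<in>C. X \<subseteq> U"
    proof (cases "C = {}")
      case True then show ?thesis using good_G0 by blast
    next
      case False then show ?thesis using good_chain[OF C] by blast
    qed
  qed
  from Zorn_Lemma2[OF this] obtain M where M: "good y0 M"
    and max: "\<And>X. good y0 X \<Longrightarrow> M \<subseteq> X \<Longrightarrow> X = M" by blast
  have tot: "\<exists>a. (z, a) \<in> M" for z
    using good_extend[OF M, of z] max by blast
  define u where "u z = (THE a. (z, a) \<in> M)" for z
  have uM: "(z, u z) \<in> M" for z
  proof -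
    obtain a where a: "(z,a) \<in> M" using tot by blast
    have "u z = a" unfolding u_def
      by (rule the_equality, fact a, use M a good_fun in blast)
    then show ?thesis using a by simp
  qed
  have un: "(z,a) \<in> M \<Longrightarrow> a = u z" for z a using uM[of z] good_fun[OF M] by blast
  have gadd: "(x,a)\<in>M \<Longrightarrow> (y,b)\<in>M \<Longrightarrow> (x+y,a+b)\<in>M" for x y a b
    using good_add[OF M] by blast
  have gsc: "(x,a)\<in>M \<Longrightarrow> (sc r x, r*a)\<in>M" for x r a
    using good_sc[OF M] by blast
  have uadd: "u (x + y) = u x + u y" for x y using un[OF gadd[OF uM uM]] by simp
  have usc: "u (sc r x) = r * u x" for r x using un[OF gsc[OF uM]] by simp
  have up: "u x \<le> p x" for x using uM good_le[OF M] by blast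
  have "\<bar>u x\<bar> \<le> p x" for x
  proof -
    have "- u x = u (sc (-1) x)" using usc[of "-1" x] by simp
    also have "\<dots> \<le> p (sc (-1) x)" by (rule up)
    also have "\<dots> = p x" using p_scale[of "-1" x] by simp
    finally show ?thesis using up[of x] by simp
  qed
  moreover have "u y0 = p y0" using un[OF good_y0[OF M]] by simp
  ultimately show ?thesis using uadd usc by blast
qed

end

lemma linear_intro:
  "vector_space sm \<Longrightarrow> (\<forall>x y. f (x+y) = f x + f y) \<Longrightarrow> (\<forall>c x. f (sm c x) = c * f x)
   \<Longrightarrow> Vector_Spaces.linear sm ((*)::complex\<Rightarrow>_) f"
  unfolding Vector_Spaces.linear_def module_hom_def module_hom_axioms_def vector_space_def module_def
  by (auto simp: algebra_simps)

locale lctvs =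
  fixes sm :: "complex \<Rightarrow> 'x::{ab_group_add,t2_space} \<Rightarrow> 'x"
  assumes tvs: "complex_tvs sm" and lc: "locally_convex sm"
begin

sublocale vs: vector_space sm
  using tvs unfolding complex_tvs_def by blast

lemma cont_add: "continuous_on UNIV (\<lambda>p::'x \<times> 'x. fst p + snd p)"
  using tvs unfolding complex_tvs_def by blast

lemma cont_sm: "continuous_on UNIV (\<lambda>p::complex \<times> 'x. sm (fst p) (snd p))"
  using tvs unfolding complex_tvs_def by blast

lemma cont_sm_right: "continuous_on UNIV (\<lambda>v. sm c v)"
proof -
  have "continuous_on UNIV ((\<lambda>p::complex \<times> 'x. sm (fst p) (snd p)) \<circ> (\<lambda>v. (c, v)))"
    by (rule continuous_on_compose, intro continuous_intros, rule continuous_on_subset[OF cont_sm]) auto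
  then show ?thesis by (simp add: o_def)
qed

lemma cont_sm_left: "continuous_on UNIV (\<lambda>c. sm c v)"
proof -
  have "continuous_on UNIV ((\<lambda>p::complex \<times> 'x. sm (fst p) (snd p)) \<circ> (\<lambda>c. (c, v)))"
    by (rule continuous_on_compose, intro continuous_intros, rule continuous_on_subset[OF cont_sm]) auto
  then show ?thesis by (simp add: o_def)
qed

lemma cont_translate: "continuous_on UNIV (\<lambda>v::'x. v + w)"
proof -
  have "continuous_on UNIV ((\<lambda>p::'x \<times> 'x. fst p + snd p) \<circ> (\<lambda>v. (v, w)))"
    by (rule continuous_on_compose, intro continuous_intros, rule continuous_on_subset[OF cont_add]) auto
  then show ?thesis by (simp add: o_def)
qed

lemma open_preimage: "continuous_on UNIV f \<Longrightarrow> open U \<Longrightarrow> open (f -` U)"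
  using continuous_on_open_vimage[of UNIV f] by auto

lemma cont_affine: "continuous_on UNIV (\<lambda>y. sm c (y - w))"
proof -
  have "continuous_on UNIV ((\<lambda>v. sm c v) \<circ> (\<lambda>v. v + (- w)))"
    by (rule continuous_on_compose, rule cont_translate, rule continuous_on_subset[OF cont_sm_right]) auto
  then show ?thesis by (simp add: o_def)
qed

lemma add_nbhd:
  fixes U :: "'x set"
  assumes "open U" "0 \<in> U"
  shows "\<exists>W. open W \<and> 0 \<in> W \<and> (\<forall>w1\<in>W. \<forall>w2\<in>W. w1 + w2 \<in> U)"
proof -
  have "open ((\<lambda>p::'x \<times> 'x. fst p + snd p) -` U)" by (rule open_preimage[OF cont_add assms(1)])
  moreover have "(0,0) \<in> (\<lambda>p::'x \<times> 'x. fst p + snd p) -` U" using assms by simp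
  ultimately obtain A B where "open A" "open B" "(0,0) \<in> A \<times> B" "A \<times> B \<subseteq> (\<lambda>p::'x \<times> 'x. fst p + snd p) -` U"
    by (rule open_prod_elim)
  then show ?thesis by (intro exI[of _ "A \<inter> B"]) auto
qed

lemma good_nbhd:
  fixes U :: "'x set"
  assumes "open U" "0 \<in> U"
  shows "\<exists>V. open V \<and> 0 \<in> V \<and> V \<subseteq> U \<and> cconvex sm V \<and> (\<forall>v\<in>V. sm \<i> v \<in> V)"
proof -
  obtain V0 where V0: "open V0" "0 \<in> V0" "V0 \<subseteq> U" "cconvex sm V0"
    using lc assms unfolding locally_convex_def by blast
  define V where "V = {v. \<forall>k<(4::nat). sm (\<i> ^ k) v \<in> V0}"
  have "V = (\<Inter>k\<in>{..<4::nat}. (\<lambda>v. sm (\<i> ^ k) v) -` V0)" unfolding V_def by auto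
  then have "open V" using V0(1) by (auto intro!: open_preimage[OF cont_sm_right])
  moreover have "0 \<in> V" using V0 unfolding V_def by simp
  moreover have "V \<subseteq> U"
  proof
    fix v assume "v \<in> V"
    then have "sm (\<i> ^ 0) v \<in> V0" unfolding V_def by (simp only: mem_Collect_eq)
    then show "v \<in> U" using V0 by auto
  qed
  moreover have "cconvex sm V"
    unfolding cconvex_def
  proof (intro ballI allI impI)
    fix v w :: 'x and u :: real assume v: "v \<in> V" and w: "w \<in> V" and u: "0 \<le> u \<and> u \<le> 1"
    show "sm (complex_of_real u) v + sm (complex_of_real (1 - u)) w \<in> V"
      unfolding V_def
    proof (intro CollectI allI impI)
      fix k :: nat assume k: "k < 4"
      have "sm (\<i> ^ k) v \<in> V0" "sm (\<i> ^ k) w \<in> V0" using v w k unfolding V_def by auto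
      then have "sm (complex_of_real u) (sm (\<i> ^ k) v) + sm (complex_of_real (1 - u)) (sm (\<i> ^ k) w) \<in> V0"
        using V0(4) u unfolding cconvex_def by blast
      moreover have "sm (\<i> ^ k) (sm (complex_of_real u) v + sm (complex_of_real (1 - u)) w) =
         sm (complex_of_real u) (sm (\<i> ^ k) v) + sm (complex_of_real (1 - u)) (sm (\<i> ^ k) w)"
        by (simp add: vs.scale_right_distrib vs.scale_scale mult.commute)
      ultimately show "sm (\<i> ^ k) (sm (complex_of_real u) v + sm (complex_of_real (1 - u)) w) \<in> V0" by simp
    qed
  qed
  moreover have "\<forall>v\<in>V. sm \<i> v \<in> V"
  proof (intro ballI)
    fix v assume v: "v \<in> V"
    show "sm \<i> v \<in> V" unfolding V_def
    proof (intro CollectI allI impI)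
      fix k :: nat assume k: "k < 4"
      have e: "sm (\<i> ^ k) (sm \<i> v) = sm (\<i> ^ Suc k) v" by (simp add: vs.scale_scale mult.commute)
      show "sm (\<i> ^ k) (sm \<i> v) \<in> V0"
      proof (cases "k = 3")
        case True
        have "\<i> ^ Suc k = \<i> ^ 0" using True by (simp add: power4_eq_xxxx)
        moreover have "sm (\<i> ^ 0) v \<in> V0" using v unfolding V_def by (simp only: mem_Collect_eq)
        ultimately show ?thesis using e by simp
      next
        case False
        then have "Suc k < 4" using k by simp
        then have "sm (\<i> ^ Suc k) v \<in> V0" using v unfolding V_def by blast
        then show ?thesis by (simp only: e)
      qed
    qed
  qed
  ultimately show ?thesis by blast
qed

definition rsc :: "real \<Rightarrow> 'x \<Rightarrow> 'x" where "rsc r v = sm (complex_of_real r) v"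

lemma rsc_rsc: "rsc a (rsc b v) = rsc (a * b) v"
  unfolding rsc_def by (simp add: vs.scale_scale)
lemma rsc_add_right: "rsc a (v + w) = rsc a v + rsc a w"
  unfolding rsc_def by (simp add: vs.scale_right_distrib)
lemma rsc_add_left: "rsc (a + b) v = rsc a v + rsc b v"
  unfolding rsc_def by (simp add: vs.scale_left_distrib)
lemma rsc_one [simp]: "rsc 1 v = v" unfolding rsc_def by simp
lemma rsc_zero [simp]: "rsc 0 v = 0" unfolding rsc_def by simp
lemma rsc_0 [simp]: "rsc a 0 = 0" unfolding rsc_def by simp
lemma rsc_neg1: "rsc (-1) v = - v" unfolding rsc_def by simp
lemma rsc_i: "sm \<i> (rsc a v) = rsc a (sm \<i> v)"
  unfolding rsc_def by (simp add: vs.scale_scale mult.commute)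
lemma rsc_vs: "vector_space rsc"
  unfolding vector_space_def rsc_def by (simp add: vs.scale_right_distrib vs.scale_left_distrib vs.scale_scale)
lemma cconvex_rsc: "cconvex sm C \<longleftrightarrow> (\<forall>x\<in>C. \<forall>y\<in>C. \<forall>u::real. 0 \<le> u \<and> u \<le> 1 \<longrightarrow> rsc u x + rsc (1 - u) y \<in> C)"
  unfolding cconvex_def rsc_def ..

end

locale gauge = lctvs sm for sm :: "complex \<Rightarrow> 'x::{ab_group_add,t2_space} \<Rightarrow> 'x" +
  fixes V :: "'x set"
  assumes V_open: "open V" and V0: "0 \<in> V" and V_conv: "cconvex sm V"
    and V_i: "\<And>v. v \<in> V \<Longrightarrow> sm \<i> v \<in> V"
begin

definition S :: "'x \<Rightarrow> real set" where "S x = {r. 0 < r \<and> rsc (1/r) x \<in> V}"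
definition p :: "'x \<Rightarrow> real" where "p x = Inf (S x)"

lemma S_iff: "r \<in> S x \<longleftrightarrow> 0 < r \<and> rsc (1/r) x \<in> V"
  unfolding S_def by (simp only: mem_Collect_eq)

lemma V_shrink: "v \<in> V \<Longrightarrow> 0 \<le> t \<Longrightarrow> t \<le> 1 \<Longrightarrow> rsc t v \<in> V"
proof -
  assume "v \<in> V" "0 \<le> t" "t \<le> 1"
  then have "rsc t v + rsc (1 - t) 0 \<in> V"
    using V_conv V0 unfolding cconvex_rsc by blast
  then show ?thesis by simp
qed

lemma V_i_iff: "sm \<i> v \<in> V \<longleftrightarrow> v \<in> V"
proof
  assume "sm \<i> v \<in> V"
  then have "sm \<i> (sm \<i> (sm \<i> (sm \<i> v))) \<in> V" using V_i by blast
  moreover have "sm \<i> (sm \<i> (sm \<i> (sm \<i> v))) = v" by (simp add: vs.scale_scale)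
  ultimately show "v \<in> V" by simp
qed (rule V_i)

lemma absorb: "\<exists>r>0. rsc (1/r) x \<in> V"
proof -
  have "open ((\<lambda>c. sm c x) -` V)" by (rule open_preimage[OF cont_sm_left V_open])
  moreover have "0 \<in> (\<lambda>c. sm c x) -` V" using V0 by simp
  ultimately obtain d where d: "d > 0" "ball 0 d \<subseteq> (\<lambda>c. sm c x) -` V"
    by (meson open_contains_ball)
  have "complex_of_real (d/2) \<in> ball 0 d" using d by (simp add: dist_norm)
  then have "sm (complex_of_real (d/2)) x \<in> V" using d(2) by blast
  then have "rsc (d/2) x \<in> V" unfolding rsc_def .
  moreover have "1/(2/d) = d/2" by simp
  ultimately show ?thesis using d by (intro exI[of _ "2/d"]) simp
qed

lemma S_ne: "S x \<noteq> {}" using absorb S_iff by blast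

lemma S_bdd: "bdd_below (S x)" by (rule bdd_belowI[of _ 0]) (simp add: S_iff)

lemma S_up: "r \<in> S x \<Longrightarrow> r \<le> r' \<Longrightarrow> r' \<in> S x"
proof -
  assume r: "r \<in> S x" "r \<le> r'"
  then have r0: "r > 0" "rsc (1/r) x \<in> V" unfolding S_iff by auto
  have "rsc (r/r') (rsc (1/r) x) \<in> V"
    by (rule V_shrink[OF r0(2)]) (use r r0 in auto)
  moreover have "rsc (r/r') (rsc (1/r) x) = rsc (1/r') x"
    using r0 by (simp add: rsc_rsc)
  ultimately show "r' \<in> S x" using r0 r unfolding S_iff by auto
qed

lemma p_nonneg: "p x \<ge> 0"
  unfolding p_def using S_ne by (rule cInf_greatest) (simp add: S_iff)

lemma p_le: "r \<in> S x \<Longrightarrow> p x \<le> r"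
  unfolding p_def by (rule cInf_lower[OF _ S_bdd])

lemma p_less: "p x < r \<Longrightarrow> r \<in> S x"
proof -
  assume "p x < r"
  then obtain r0 where "r0 \<in> S x" "r0 < r" unfolding p_def using S_ne by (meson cInf_lessD)
  then show "r \<in> S x" using S_up by auto
qed

lemma p_less_1: "p x < 1 \<Longrightarrow> x \<in> V"
  using p_less[of x 1] unfolding S_iff by simp

lemma in_V_p: "x \<in> V \<Longrightarrow> p x < 1"
proof -
  assume xV: "x \<in> V"
  have "open ((\<lambda>c. sm c x) -` V)" by (rule open_preimage[OF cont_sm_left V_open])
  moreover have "1 \<in> (\<lambda>c. sm c x) -` V" using xV by simp
  ultimately obtain d where d: "d > 0" "ball 1 d \<subseteq> (\<lambda>c. sm c x) -` V"
    by (meson open_contains_ball)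
  have "complex_of_real (1 + d/2) \<in> ball 1 d" using d by (simp add: dist_norm)
  then have "sm (complex_of_real (1 + d/2)) x \<in> V" using d(2) by blast
  then have "rsc (1 / (1/(1 + d/2))) x \<in> V" unfolding rsc_def using d by simp
  then have "1/(1 + d/2) \<in> S x" unfolding S_iff using d by simp
  then have "p x \<le> 1/(1 + d/2)" by (rule p_le)
  also have "\<dots> < 1" using d by (simp add: field_simps)
  finally show ?thesis .
qed

lemma p_zero: "p 0 = 0"
proof -
  have "p 0 \<le> r" if "r > 0" for r using that V0 by (intro p_le) (simp add: S_iff)
  then have "p 0 \<le> 0" by (rule field_le_epsilon) simp
  then show ?thesis using p_nonneg[of 0] by simp
qed

lemma p_pos_scale_le:
  assumes c: "c > 0" shows "p (rsc c x) \<le> c * p x"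
proof (rule field_le_epsilon)
  fix e :: real assume e: "e > 0"
  have pe: "p x + e/c \<in> S x" using c e by (intro p_less) simp
  have pos: "p x + e/c > 0" using p_nonneg[of x] e c by (simp add: add_nonneg_pos)
  have "rsc (1 / (c * (p x + e/c))) (rsc c x) = rsc (1 / (p x + e/c)) x"
    using c by (simp add: rsc_rsc)
  then have "c * (p x + e/c) \<in> S (rsc c x)"
    using pe pos c unfolding S_iff by simp
  then have "p (rsc c x) \<le> c * (p x + e/c)" by (rule p_le)
  moreover have "c * (p x + e/c) = c * p x + e" using c by (simp add: field_simps)
  ultimately show "p (rsc c x) \<le> c * p x + e" by linarith
qed

lemma p_pos_scale:
  assumes c: "c > 0" shows "p (rsc c x) = c * p x"
proof -
  have "p (rsc (1/c) (rsc c x)) \<le> (1/c) * p (rsc c x)"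
    using c by (intro p_pos_scale_le) simp
  then have "p x \<le> (1/c) * p (rsc c x)" using c by (simp add: rsc_rsc)
  then have "c * p x \<le> p (rsc c x)" using c by (simp add: field_simps)
  then show ?thesis using p_pos_scale_le[OF c, of x] by simp
qed

lemma S_i: "S (sm \<i> x) = S x"
  unfolding S_def using V_i_iff by (simp add: rsc_i[symmetric])

lemma p_i: "p (sm \<i> x) = p x" unfolding p_def S_i ..

lemma p_neg: "p (- x) = p x"
proof -
  have "- x = sm \<i> (sm \<i> x)" by (simp add: vs.scale_scale)
  then show ?thesis using p_i by metis
qed

lemma p_real_scale: "p (rsc c x) = \<bar>c\<bar> * p x"
proof (cases "c > 0")
  case True then show ?thesis using p_pos_scale by simp
next
  case False
  show ?thesis
  proof (cases "c = 0")
    case True then show ?thesis using p_zero by simp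
  next
    case False
    then have "c < 0" using \<open>\<not> c > 0\<close> by simp
    have "rsc c x = - rsc (-c) x" using rsc_neg1[of "rsc (-c) x"] by (simp add: rsc_rsc)
    then have "p (rsc c x) = p (rsc (-c) x)" using p_neg by metis
    also have "\<dots> = (-c) * p x" using \<open>c < 0\<close> by (intro p_pos_scale) simp
    finally show ?thesis using \<open>c < 0\<close> by simp
  qed
qed

lemma p_add: "p (x + y) \<le> p x + p y"
proof (rule field_le_epsilon)
  fix e :: real assume e: "e > 0"
  define r where "r = p x + e/2"
  define s where "s = p y + e/2"
  have r0: "r > 0" "s > 0" using p_nonneg[of x] p_nonneg[of y] e r_def s_def by auto
  have "r \<in> S x" "s \<in> S y" using e r_def s_def by (auto intro: p_less)
  then have xr: "rsc (1/r) x \<in> V" and ys: "rsc (1/s) y \<in> V"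
    unfolding S_iff by auto
  have u: "0 \<le> r/(r+s)" "r/(r+s) \<le> 1" using r0 by auto
  have "rsc (r/(r+s)) (rsc (1/r) x) + rsc (1 - r/(r+s)) (rsc (1/s) y) \<in> V"
    using V_conv xr ys u unfolding cconvex_rsc by blast
  moreover have "rsc (r/(r+s)) (rsc (1/r) x) + rsc (1 - r/(r+s)) (rsc (1/s) y)
        = rsc (1/(r+s)) (x + y)"
  proof -
    have "1 - r/(r+s) = s/(r+s)" using r0 by (simp add: field_simps)
    then show ?thesis using r0 by (simp add: rsc_rsc rsc_add_right)
  qed
  ultimately have "r + s \<in> S (x + y)" unfolding S_iff using r0 by simp
  then have "p (x + y) \<le> r + s" by (rule p_le)
  then show "p (x + y) \<le> p x + p y + e" using r_def s_def by simp
qed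

lemma p_diff_small:
  assumes "d > 0" shows "\<exists>A. open A \<and> w \<in> A \<and> (\<forall>y\<in>A. p (y - w) < d)"
proof -
  define A where "A = (\<lambda>y. sm (complex_of_real (1/d)) (y - w)) -` V"
  have "open A" unfolding A_def by (rule open_preimage[OF cont_affine V_open])
  moreover have "w \<in> A" unfolding A_def using V0 by simp
  moreover have "p (y - w) < d" if "y \<in> A" for y
  proof -
    have "rsc (1/d) (y - w) \<in> V" using that unfolding A_def rsc_def by simp
    then have "p (rsc (1/d) (y - w)) < 1" by (rule in_V_p)
    then show ?thesis using p_pos_scale[of "1/d" "y - w"] assms by (simp add: field_simps)
  qed
  ultimately show ?thesis by blast
qed

definition rlin :: "('x \<Rightarrow> real) \<Rightarrow> bool" where
  "rlin u \<longleftrightarrow> (\<forall>x y. u (x + y) = u x + u y) \<and> (\<forall>r x. u (rsc r x) = r * u x)"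

lemma rlin_add: "rlin u \<Longrightarrow> u (x + y) = u x + u y" unfolding rlin_def by blast
lemma rlin_rsc: "rlin u \<Longrightarrow> u (rsc r x) = r * u x" unfolding rlin_def by blast
lemma rlin_neg: "rlin u \<Longrightarrow> u (- x) = - u x"
  using rlin_rsc[of u "-1" x] by (simp add: rsc_neg1)
lemma rlin_diff: "rlin u \<Longrightarrow> u (x - y) = u x - u y"
  using rlin_add[of u x "- y"] rlin_neg[of u y] by simp
lemma rlin_zero: "rlin u \<Longrightarrow> u 0 = 0"
  using rlin_rsc[of u 0 0] by simp

lemma dominated_cont:
  assumes u: "rlin u" and C: "C \<ge> 0" and b: "\<And>x. \<bar>u x\<bar> \<le> C * p x"
  shows "continuous_on UNIV u"
  unfolding continuous_on_topological
proof (intro ballI allI impI)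
  fix w B assume "open B" "u w \<in> B"
  then obtain e where e: "e > 0" "ball (u w) e \<subseteq> B" by (meson open_contains_ball)
  obtain A where A: "open A" "w \<in> A" "\<forall>y\<in>A. p (y - w) < e / (C + 1)"
    using p_diff_small[of "e/(C+1)" w] e C by auto
  have "u y \<in> B" if "y \<in> A" for y
  proof -
    have "\<bar>u y - u w\<bar> = \<bar>u (y - w)\<bar>" using rlin_diff[OF u] by simp
    also have "\<dots> \<le> C * p (y - w)" by (rule b)
    also have "\<dots> \<le> (C + 1) * p (y - w)" using p_nonneg[of "y - w"] by (simp add: mult_right_mono)
    also have "\<dots> < (C + 1) * (e / (C + 1))" using A that C by (intro mult_strict_left_mono) auto
    also have "\<dots> = e" using C by simp
    finally have "dist (u y) (u w) < e" by (simp add: dist_real_def)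
    then show ?thesis using e by (auto simp: dist_commute)
  qed
  then show "\<exists>A. open A \<and> w \<in> A \<and> (\<forall>y\<in>UNIV. y \<in> A \<longrightarrow> u y \<in> B)" using A by blast
qed

lemma cx_decomp: "sm c x = rsc (Re c) x + rsc (Im c) (sm \<i> x)"
proof -
  have "c = complex_of_real (Re c) + complex_of_real (Im c) * \<i>" by (simp add: complex_eq_iff)
  then have "sm c x = sm (complex_of_real (Re c) + complex_of_real (Im c) * \<i>) x" by simp
  also have "\<dots> = rsc (Re c) x + rsc (Im c) (sm \<i> x)"
    unfolding rsc_def by (simp add: vs.scale_left_distrib vs.scale_scale)
  finally show ?thesis .
qed

lemma complexify:
  assumes u: "rlin u" and uc: "continuous_on UNIV u"
  shows "(\<lambda>x. Complex (u x) (- u (sm \<i> x))) \<in> topdual sm"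
proof -
  let ?f = "\<lambda>x. Complex (u x) (- u (sm \<i> x))"
  have add: "u (x + y) = u x + u y" for x y using rlin_add[OF u] .
  have sc: "u (rsc r x) = r * u x" for r x using rlin_rsc[OF u] .
  have "?f (sm c x) = c * ?f x" for c x
  proof -
    have i2: "sm \<i> (sm \<i> x) = - x" by (simp add: vs.scale_scale)
    have un: "u (- x) = - u x" using rlin_neg[OF u] .
    have e1: "u (sm c x) = Re c * u x + Im c * u (sm \<i> x)"
      using cx_decomp[of c x] add sc by simp
    have e2: "u (sm \<i> (sm c x)) = - Im c * u x + Re c * u (sm \<i> x)"
    proof -
      have "u (sm \<i> (sm c x)) = u (sm c (sm \<i> x))" by (simp add: vs.scale_scale mult.commute)
      also have "\<dots> = Re c * u (sm \<i> x) + Im c * u (sm \<i> (sm \<i> x))"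
        by (simp only: cx_decomp[of c "sm \<i> x"] add sc)
      also have "\<dots> = - Im c * u x + Re c * u (sm \<i> x)" using i2 un by simp
      finally show ?thesis .
    qed
    show ?thesis using e1 e2 by (simp add: complex_eq_iff algebra_simps)
  qed
  moreover have "?f (x + y) = ?f x + ?f y" for x y using add by (simp add: vs.scale_right_distrib complex_eq_iff)
  ultimately have "Vector_Spaces.linear sm (*) ?f"
    by (intro linear_intro vs.vector_space_axioms) auto
  moreover have "continuous_on UNIV ?f"
  proof -
    have "continuous_on UNIV (u \<circ> (\<lambda>x. sm \<i> x))"
      by (rule continuous_on_compose, rule cont_sm_right, rule continuous_on_subset[OF uc]) auto
    then have "continuous_on UNIV (\<lambda>x. u (sm \<i> x))" by (simp add: o_def)
    then show ?thesis using uc by (intro continuous_intros)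
  qed
  ultimately show ?thesis unfolding topdual_def by blast
qed

end

lemma geo: "(\<lambda>j. (1/3::real)^Suc j) sums (1/2)"
proof -
  have "(\<lambda>j. (1/3::real)^j) sums (1 / (1 - 1/3))" by (rule geometric_sums) simp
  then have "(\<lambda>j. (1/3) * (1/3::real)^j) sums ((1/3) * (1 / (1 - 1/3)))" by (rule sums_mult)
  then show ?thesis by simp
qed

lemma series_bound:
  fixes f :: "nat \<Rightarrow> real"
  assumes "\<And>j. \<bar>f j\<bar> \<le> c * (1/3)^Suc j"
  shows "summable f \<and> \<bar>suminf f\<bar> \<le> c / 2"
proof -
  have g: "(\<lambda>j. c * (1/3::real)^Suc j) sums (c * (1/2))" by (rule sums_mult[OF geo])
  then have sg: "summable (\<lambda>j. c * (1/3::real)^Suc j)" by (rule sums_summable)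
  have sf: "summable f" using assms by (intro summable_comparison_test[OF _ sg]) simp
  have sa: "summable (\<lambda>j. norm (f j))" using assms by (intro summable_comparison_test[OF _ sg]) simp
  have "\<bar>suminf f\<bar> \<le> (\<Sum>j. norm (f j))" using summable_norm[OF sa] by simp
  also have "\<dots> \<le> (\<Sum>j. c * (1/3::real)^Suc j)" using assms by (intro suminf_le sa sg) simp
  also have "\<dots> = c / 2" using sums_unique[OF g] by simp
  finally show ?thesis using sf by simp
qed

lemma zero_topdual: "vector_space sm \<Longrightarrow> (\<lambda>_. 0) \<in> topdual sm"
  unfolding topdual_def by (auto intro: linear_intro)

locale wcs = lctvs sm for sm :: "complex \<Rightarrow> 'x::{ab_group_add,t2_space} \<Rightarrow> 'x" +
  fixes xf :: "real \<Rightarrow> 'x" and a b :: real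
  assumes wc: "weakly_compact_semivariation sm xf a b"
begin

abbreviation "E \<equiv> Eset xf a b"

lemma weak_topspace: "topspace (weak_topology sm) = UNIV"
proof -
  have "(\<lambda>_. 0) \<in> topdual sm" by (rule zero_topdual[OF vs.vector_space_axioms])
  then have "UNIV \<in> {f -` V | f V. f \<in> topdual sm \<and> open V}"
    by (intro CollectI exI[of _ "\<lambda>_. 0"] exI[of _ UNIV]) auto
  then show ?thesis unfolding weak_topology_def by auto
qed

lemma topdual_bounded:
  assumes f: "f \<in> topdual sm"
  shows "\<exists>B. \<forall>e\<in>E. cmod (f e) \<le> B"
proof -
  let ?T = "weak_topology sm"
  have cm: "continuous_map ?T euclidean f"
    unfolding continuous_map_def weak_topspace
  proof (intro conjI allI impI)
    show "f \<in> UNIV \<rightarrow> topspace euclidean" by simp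
    fix U :: "complex set" assume "openin euclidean U"
    then have "open U" by simp
    then have "f -` U \<in> {f -` V | f V. f \<in> topdual sm \<and> open V}" using f by blast
    then have "openin ?T (f -` U)"
      unfolding weak_topology_def openin_topology_generated_by_iff
      by (rule generate_topology_on.Basis)
    moreover have "{x \<in> UNIV. f x \<in> U} = f -` U" by auto
    ultimately show "openin ?T {x \<in> UNIV. f x \<in> U}" by simp
  qed
  have "compactin ?T (?T closure_of E)" using wc unfolding weakly_compact_semivariation_def .
  then have "compactin euclidean (f ` (?T closure_of E))" using cm by (rule image_compactin)
  then have "bounded (f ` (?T closure_of E))" by (simp add: compact_imp_bounded)
  then obtain B where B: "\<forall>y\<in>f ` (?T closure_of E). norm y \<le> B" unfolding bounded_iff by blast
  have "E \<subseteq> ?T closure_of E" by (rule closure_of_subset) (simp add: weak_topspace)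
  then show ?thesis using B by auto
qed

end

locale gwcs = gauge sm V + wcs sm xf a b
  for sm :: "complex \<Rightarrow> 'x::{ab_group_add,t2_space} \<Rightarrow> 'x" and V xf a b
begin

lemma rlin_bounded:
  assumes u: "rlin u" and C: "C \<ge> 0" and d: "\<And>x. \<bar>u x\<bar> \<le> C * p x"
  shows "\<exists>B. \<forall>e\<in>E. \<bar>u e\<bar> \<le> B"
proof -
  have uc: "continuous_on UNIV u" by (rule dominated_cont[OF u C d])
  obtain B where B: "\<forall>e\<in>E. cmod (Complex (u e) (- u (sm \<i> e))) \<le> B"
    using topdual_bounded[OF complexify[OF u uc]] by blast
  have "\<bar>u e\<bar> \<le> B" if "e \<in> E" for e
    using B that abs_Re_le_cmod[of "Complex (u e) (- u (sm \<i> e))"] by force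
  then show ?thesis by blast
qed

lemma norming: "\<exists>u. rlin u \<and> (\<forall>x. \<bar>u x\<bar> \<le> p x) \<and> u y = p y"
proof -
  interpret h: hbl rsc p
    by (rule hbl.intro[OF rsc_vs], unfold_locales) (auto simp: p_add p_real_scale)
  from h.hahn_banach[of y] show ?thesis unfolding rlin_def by blast
qed

lemma E_bounded: "\<exists>K. \<forall>e\<in>E. p e \<le> K"
proof (rule ccontr)
  assume nb: "\<not> (\<exists>K. \<forall>e\<in>E. p e \<le> K)"
  define pick where "pick K = (SOME e. e \<in> E \<and> p e > K)" for K
  have pick: "pick K \<in> E \<and> p (pick K) > K" for K
  proof -
    have "\<exists>e. e \<in> E \<and> p e > K"
    proof (rule ccontr)
      assume "\<not> (\<exists>e. e \<in> E \<and> p e > K)"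
      then have "\<forall>e\<in>E. p e \<le> K" by (auto simp: not_less)
      then show False using nb by blast
    qed
    then show ?thesis unfolding pick_def by (rule someI_ex)
  qed
  define nf where "nf y = (SOME u. rlin u \<and> (\<forall>x. \<bar>u x\<bar> \<le> p x) \<and> u y = p y)" for y
  have nf: "rlin (nf y) \<and> (\<forall>x. \<bar>nf y x\<bar> \<le> p x) \<and> nf y y = p y" for y
    unfolding nf_def using norming[of y] by (rule someI_ex)
  define bd where "bd u = (SOME B. \<forall>e\<in>E. \<bar>u e\<bar> \<le> B)" for u :: "'x \<Rightarrow> real"
  have bd: "\<forall>e\<in>E. \<bar>nf y e\<bar> \<le> bd (nf y)" for y
  proof -
    have "\<exists>B. \<forall>e\<in>E. \<bar>nf y e\<bar> \<le> B" using nf[of y] by (intro rlin_bounded[of _ 1]) auto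
    then show ?thesis unfolding bd_def by (rule someI_ex)
  qed
  define L where "L k t = (2 * (real k + t + 1)) * 3^(Suc k)" for k :: nat and t :: real
  define T where "T = rec_nat 0 (\<lambda>k t. t + bd (nf (pick (L k t))))"
  have T0: "T 0 = 0" unfolding T_def by simp
  have TS: "T (Suc k) = T k + bd (nf (pick (L k (T k))))" for k unfolding T_def by simp
  define ev where "ev k = pick (L k (T k))" for k
  define u where "u k = nf (ev k)" for k
  have evE: "ev k \<in> E" for k unfolding ev_def using pick by blast
  have evp: "p (ev k) > L k (T k)" for k unfolding ev_def using pick by blast
  have ul: "rlin (u k)" for k unfolding u_def using nf by blast
  have ud: "\<bar>u k x\<bar> \<le> p x" for k x unfolding u_def using nf by blast
  have un: "u k (ev k) = p (ev k)" for k unfolding u_def using nf by blast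
  have ub: "\<bar>u k e\<bar> \<le> bd (u k)" if "e \<in> E" for k e unfolding u_def using bd that by blast
  have Tsum: "T k = (\<Sum>j<k. bd (u j))" for k
    by (induction k) (simp_all add: T0 TS u_def ev_def)
  define U where "U x = (\<Sum>j. (1/3)^Suc j * u j x)" for x
  have ser: "summable (\<lambda>j. (1/3::real)^Suc j * u j x) \<and> \<bar>U x\<bar> \<le> p x / 2" for x
  proof -
    have "\<bar>(1/3::real)^Suc j * u j x\<bar> \<le> p x * (1/3)^Suc j" for j
      using ud[of j x] by (simp add: abs_mult mult.commute mult_left_mono del: power_Suc)
    then show ?thesis unfolding U_def by (rule series_bound)
  qed
  have Ul: "rlin U"
    unfolding rlin_def
  proof (intro conjI allI)
    fix x y
    have "U x + U y = (\<Sum>j. (1/3)^Suc j * u j x + (1/3)^Suc j * u j y)"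
      unfolding U_def using ser by (intro suminf_add) auto
    also have "\<dots> = U (x + y)" unfolding U_def rlin_add[OF ul] by (simp only: distrib_left)
    finally show "U (x + y) = U x + U y" by simp
  next
    fix r x
    have "r * U x = (\<Sum>j. r * ((1/3)^Suc j * u j x))"
      unfolding U_def using ser by (intro suminf_mult[symmetric]) auto
    also have "\<dots> = U (rsc r x)" unfolding U_def rlin_rsc[OF ul] by (simp only: mult.left_commute)
    finally show "U (rsc r x) = r * U x" by simp
  qed
  obtain B0 where B0: "\<forall>e\<in>E. \<bar>U e\<bar> \<le> B0"
    using rlin_bounded[OF Ul, of "1/2"] ser by force
  have big: "U (ev k) > real k + 1" for k
  proof -
    let ?f = "\<lambda>j. (1/3::real)^Suc j * u j (ev k)"
    have sf: "summable ?f" using ser by blast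
    have split: "U (ev k) = (\<Sum>i. ?f (i + Suc k)) + (\<Sum>j<Suc k. ?f j)"
      unfolding U_def by (rule suminf_split_initial_segment[OF sf])
    have tail: "\<bar>\<Sum>i. ?f (i + Suc k)\<bar> \<le> ((1/3)^Suc k * p (ev k)) / 2"
    proof -
      have "\<bar>?f (i + Suc k)\<bar> \<le> ((1/3)^Suc k * p (ev k)) * (1/3)^Suc i" for i
      proof -
        have "\<bar>?f (i + Suc k)\<bar> = (1/3)^Suc (i + Suc k) * \<bar>u (i + Suc k) (ev k)\<bar>"
          by (simp add: abs_mult del: power_Suc)
        also have "\<dots> \<le> (1/3)^Suc (i + Suc k) * p (ev k)"
          using ud by (intro mult_left_mono) auto
        finally have A: "\<bar>?f (i + Suc k)\<bar> \<le> (1/3)^Suc (i + Suc k) * p (ev k)" .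
        have eq: "(1/3::real)^Suc (i + Suc k) = (1/3)^Suc k * (1/3)^Suc i"
          by (simp add: power_add[symmetric] add.commute del: power_Suc)
        show ?thesis using A unfolding eq by (simp add: mult_ac del: power_Suc)
      qed
      then show ?thesis by (rule series_bound[THEN conjunct2])
    qed
    have head: "\<bar>\<Sum>j<k. ?f j\<bar> \<le> T k"
    proof -
      have "\<bar>\<Sum>j<k. ?f j\<bar> \<le> (\<Sum>j<k. \<bar>?f j\<bar>)" by (rule sum_abs)
      also have "\<dots> \<le> (\<Sum>j<k. bd (u j))"
      proof (rule sum_mono)
        fix j assume "j \<in> {..<k}"
        have "\<bar>?f j\<bar> = (1/3)^Suc j * \<bar>u j (ev k)\<bar>" by (simp add: abs_mult del: power_Suc)
        also have "\<dots> \<le> 1 * \<bar>u j (ev k)\<bar>"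
          by (intro mult_right_mono) (simp_all add: power_le_one del: power_Suc)
        also have "\<dots> \<le> bd (u j)" using ub[OF evE] by simp
        finally show "\<bar>?f j\<bar> \<le> bd (u j)" .
      qed
      finally show ?thesis using Tsum by simp
    qed
    have fk: "?f k = (1/3)^Suc k * p (ev k)" using un by simp
    have "U (ev k) = (\<Sum>i. ?f (i + Suc k)) + (\<Sum>j<k. ?f j) + (1/3)^Suc k * p (ev k)"
      using split fk by simp
    then have "U (ev k) \<ge> (1/3)^Suc k * p (ev k) / 2 - T k" using tail head by linarith
    moreover have "(1/3::real)^Suc k * p (ev k) / 2 > real k + T k + 1"
    proof -
      have qpos: "(3::real)^Suc k > 0" by simp
      have "p (ev k) > (2 * (real k + T k + 1)) * 3^(Suc k)" using evp unfolding L_def .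
      then have "2 * (real k + T k + 1) < p (ev k) / 3^Suc k"
        using qpos by (simp only: pos_less_divide_eq)
      moreover have "(1/3::real)^Suc k * p (ev k) = p (ev k) / 3^Suc k"
        by (simp add: power_one_over)
      ultimately show ?thesis by simp
    qed
    ultimately show ?thesis by simp
  qed
  obtain k :: nat where "real k \<ge> B0" using real_arch_simple by blast
  then have "U (ev k) > B0" using big[of k] by simp
  moreover have "\<bar>U (ev k)\<bar> \<le> B0" using B0 evE by blast
  ultimately show False by simp
qed

end

context
  fixes xf :: "real \<Rightarrow> 'x::ab_group_add" and a :: real
begin

definition repok :: "nat \<Rightarrow> (nat \<Rightarrow> real) \<Rightarrow> bool" where
  "repok m s \<longleftrightarrow> (m \<ge> 1 \<longrightarrow> a \<le> s 1) \<and> (\<forall>i\<in>{1..<2*m}. s i < s (Suc i))"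

definition repsum :: "nat \<Rightarrow> (nat \<Rightarrow> real) \<Rightarrow> 'x" where
  "repsum m s = (\<Sum>i\<in>{1..m}. xf (s (2*i)) - xf (s (2*i - 1)))"

lemma repsum_Suc: "repsum (Suc m) s = repsum m s + (xf (s (2*Suc m)) - xf (s (2*Suc m - 1)))"
  unfolding repsum_def by simp

lemma repsum_cong: "(\<And>i. 1 \<le> i \<Longrightarrow> i \<le> 2*m \<Longrightarrow> s i = s' i) \<Longrightarrow> repsum m s = repsum m s'"
  unfolding repsum_def by (intro sum.cong refl) auto

lemma intervals_rep:
  assumes "finite F" "\<forall>(\<alpha>,\<beta>)\<in>F. a \<le> \<alpha> \<and> \<alpha> < \<beta> \<and> \<beta> \<le> c"
    "\<forall>(\<alpha>,\<beta>)\<in>F. \<forall>(\<alpha>',\<beta>')\<in>F. (\<alpha>,\<beta>) \<noteq> (\<alpha>',\<beta>') \<longrightarrow> \<beta> \<le> \<alpha>' \<or> \<beta>' \<le> \<alpha>"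
  shows "\<exists>m s. repok m s \<and> (\<Sum>(\<alpha>,\<beta>)\<in>F. xf \<beta> - xf \<alpha>) = repsum m s \<and> (m \<ge> 1 \<longrightarrow> s (2*m) \<le> c)"
  using assms
proof (induction "card F" arbitrary: F c rule: less_induct)
  case less
  show ?case
  proof (cases "F = {}")
    case True
    then show ?thesis by (intro exI[of _ 0] exI[of _ "\<lambda>_. 0"]) (simp add: repok_def repsum_def)
  next
    case False
    define \<beta>0 where "\<beta>0 = Max (snd ` F)"
    have "\<beta>0 \<in> snd ` F" unfolding \<beta>0_def using False less.prems(1) by (intro Max_in) auto
    then obtain \<alpha>0 where in0: "(\<alpha>0, \<beta>0) \<in> F" by force
    have maxb: "\<beta> \<le> \<beta>0" if "(\<alpha>, \<beta>) \<in> F" for \<alpha> \<beta>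
      unfolding \<beta>0_def using less.prems(1) that by (intro Max_ge) force+
    have p0: "a \<le> \<alpha>0" "\<alpha>0 < \<beta>0" "\<beta>0 \<le> c" using less.prems(2) in0 by auto
    define F' where "F' = F - {(\<alpha>0, \<beta>0)}"
    have F'fin: "finite F'" using less.prems(1) F'_def by simp
    have F'card: "card F' < card F" unfolding F'_def by (rule card_Diff1_less[OF less.prems(1) in0])
    have F'le: "\<beta> \<le> \<alpha>0" if "(\<alpha>, \<beta>) \<in> F'" for \<alpha> \<beta>
    proof -
      have "(\<alpha>, \<beta>) \<in> F" "(\<alpha>, \<beta>) \<noteq> (\<alpha>0, \<beta>0)" using that F'_def by auto
      then have "\<beta> \<le> \<alpha>0 \<or> \<beta>0 \<le> \<alpha>" using less.prems(3) in0 by fast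
      moreover have "\<alpha> < \<beta>" using less.prems(2) \<open>(\<alpha>, \<beta>) \<in> F\<close> by auto
      moreover have "\<beta> \<le> \<beta>0" using maxb \<open>(\<alpha>, \<beta>) \<in> F\<close> by simp
      ultimately show ?thesis by linarith
    qed
    have pr2: "\<forall>(\<alpha>,\<beta>)\<in>F'. a \<le> \<alpha> \<and> \<alpha> < \<beta> \<and> \<beta> \<le> \<alpha>0"
      using less.prems(2) F'le unfolding F'_def by auto
    have pr3: "\<forall>(\<alpha>,\<beta>)\<in>F'. \<forall>(\<alpha>',\<beta>')\<in>F'. (\<alpha>,\<beta>) \<noteq> (\<alpha>',\<beta>') \<longrightarrow> \<beta> \<le> \<alpha>' \<or> \<beta>' \<le> \<alpha>"
      using less.prems(3) unfolding F'_def by blast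
    obtain m s where ms: "repok m s" "(\<Sum>(\<alpha>,\<beta>)\<in>F'. xf \<beta> - xf \<alpha>) = repsum m s" "m \<ge> 1 \<longrightarrow> s (2*m) \<le> \<alpha>0"
      using less.hyps[OF F'card F'fin pr2 pr3] by blast
    have sumF: "(\<Sum>(\<alpha>,\<beta>)\<in>F. xf \<beta> - xf \<alpha>) = repsum m s + (xf \<beta>0 - xf \<alpha>0)"
    proof -
      have "(\<Sum>(\<alpha>,\<beta>)\<in>F. xf \<beta> - xf \<alpha>) = (case (\<alpha>0, \<beta>0) of (\<alpha>,\<beta>) \<Rightarrow> xf \<beta> - xf \<alpha>) + (\<Sum>(\<alpha>,\<beta>)\<in>F'. xf \<beta> - xf \<alpha>)"
        unfolding F'_def by (rule sum.remove[OF less.prems(1) in0])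
      then have "(\<Sum>(\<alpha>,\<beta>)\<in>F. xf \<beta> - xf \<alpha>) = (xf \<beta>0 - xf \<alpha>0) + (\<Sum>(\<alpha>,\<beta>)\<in>F'. xf \<beta> - xf \<alpha>)"
        by simp
      then show ?thesis using ms(2) by simp
    qed
    show ?thesis
    proof (cases "m = 0")
      case True
      define s' where "s' = (\<lambda>i::nat. if i = 1 then \<alpha>0 else \<beta>0)"
      have "repok 1 s'" unfolding repok_def s'_def using p0 by auto
      moreover have "repsum 1 s' = xf \<beta>0 - xf \<alpha>0" unfolding repsum_def s'_def by simp
      moreover have "repsum m s = 0" using True by (simp add: repsum_def)
      moreover have "s' (2*1) \<le> c" unfolding s'_def using p0 by simp
      ultimately show ?thesis using sumF by (intro exI[of _ 1] exI[of _ s']) simp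
    next
      case False
      then have m1: "m \<ge> 1" by simp
      have last: "s (2*m) \<le> \<alpha>0" using ms(3) m1 by simp
      show ?thesis
      proof (cases "s (2*m) < \<alpha>0")
        case True
        define s' where "s' = s(2*m+1 := \<alpha>0, 2*m+2 := \<beta>0)"
        have "repok (Suc m) s'"
          unfolding repok_def
        proof (intro conjI impI ballI)
          show "a \<le> s' 1" using ms(1) m1 unfolding repok_def s'_def by auto
        next
          fix i assume i: "i \<in> {1..<2 * Suc m}"
          show "s' i < s' (Suc i)"
          proof -
            consider "i < 2*m" | "i = 2*m" | "i = 2*m+1" using i by force
            then show ?thesis
            proof cases
              case 1
              then have "s i < s (Suc i)" using ms(1) i unfolding repok_def by auto
              then show ?thesis using 1 unfolding s'_def by simp
            next
              case 2 then show ?thesis using True unfolding s'_def by simp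
            next
              case 3 then show ?thesis using p0 unfolding s'_def by simp
            qed
          qed
        qed
        moreover have "repsum (Suc m) s' = repsum m s + (xf \<beta>0 - xf \<alpha>0)"
        proof -
          have "repsum m s' = repsum m s" by (rule repsum_cong) (simp add: s'_def)
          moreover have "s' (2 * Suc m) = \<beta>0" "s' (2 * Suc m - 1) = \<alpha>0" unfolding s'_def by simp_all
          ultimately show ?thesis using repsum_Suc[of m s'] by simp
        qed
        moreover have "s' (2 * Suc m) \<le> c" unfolding s'_def using p0 by simp
        ultimately show ?thesis using sumF by (intro exI[of _ "Suc m"] exI[of _ s']) simp
      next
        case False
        then have eq: "s (2*m) = \<alpha>0" using last by simp
        obtain m0 where m0: "m = Suc m0" using m1 by (cases m) auto
        define s' where "s' = s(2*m := \<beta>0)"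
        have "repok m s'"
          unfolding repok_def
        proof (intro conjI impI ballI)
          show "a \<le> s' 1" using ms(1) m1 unfolding repok_def s'_def by auto
        next
          fix i assume i: "i \<in> {1..<2 * m}"
          show "s' i < s' (Suc i)"
          proof (cases "Suc i = 2*m")
            case True
            have "s i < s (Suc i)" using ms(1) i unfolding repok_def by auto
            then show ?thesis using True eq p0 unfolding s'_def by auto
          next
            case False
            have "s i < s (Suc i)" using ms(1) i unfolding repok_def by auto
            then show ?thesis using False i unfolding s'_def by auto
          qed
        qed
        moreover have "repsum m s' = repsum m s + (xf \<beta>0 - xf \<alpha>0)"
        proof -
          have "repsum m0 s' = repsum m0 s" by (rule repsum_cong) (simp add: s'_def m0)
          moreover have "s' (2 * Suc m0) = \<beta>0" "s' (2 * Suc m0 - 1) = s (2 * Suc m0 - 1)"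
            unfolding s'_def m0 by simp_all
          moreover have "s (2 * Suc m0) = \<alpha>0" using eq m0 by simp
          ultimately show ?thesis using repsum_Suc[of m0 s'] repsum_Suc[of m0 s] m0 by simp
        qed
        moreover have "s' (2 * m) \<le> c" unfolding s'_def using p0 by simp
        ultimately show ?thesis using sumF by (intro exI[of _ m] exI[of _ s']) simp
      qed
    qed
  qed
qed

lemma intervals_in_E:
  assumes "finite F" "\<forall>(\<alpha>,\<beta>)\<in>F. a \<le> \<alpha> \<and> \<alpha> < \<beta> \<and> \<beta> \<le> b"
    "\<forall>(\<alpha>,\<beta>)\<in>F. \<forall>(\<alpha>',\<beta>')\<in>F. (\<alpha>,\<beta>) \<noteq> (\<alpha>',\<beta>') \<longrightarrow> \<beta> \<le> \<alpha>' \<or> \<beta>' \<le> \<alpha>"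
  shows "(\<Sum>(\<alpha>,\<beta>)\<in>F. xf \<beta> - xf \<alpha>) \<in> insert 0 (Eset xf a b)"
proof -
  obtain m s where ms: "repok m s" "(\<Sum>(\<alpha>,\<beta>)\<in>F. xf \<beta> - xf \<alpha>) = repsum m s" "m \<ge> 1 \<longrightarrow> s (2*m) \<le> b"
    using intervals_rep[OF assms] by blast
  show ?thesis
  proof (cases "m = 0")
    case True then show ?thesis using ms by (simp add: repsum_def)
  next
    case False
    then have "repsum m s \<in> Eset xf a b"
      using ms False unfolding Eset_def by (intro CollectI exI[of _ m] exI[of _ s]) (auto simp: repok_def repsum_def)
    then show ?thesis using ms by simp
  qed
qed

end

lemma td_step: "tagged_div a b n t s \<Longrightarrow> i < n \<Longrightarrow> t i \<le> t (Suc i)"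
  unfolding tagged_div_def by blast

lemma td_tag: "tagged_div a b n t s \<Longrightarrow> i < n \<Longrightarrow> t i \<le> s i \<and> s i \<le> t (Suc i)"
  unfolding tagged_div_def by blast

lemma td_ends: "tagged_div a b n t s \<Longrightarrow> t 0 = a \<and> t n = b"
  unfolding tagged_div_def by blast

lemma td_mono: "tagged_div a b n t s \<Longrightarrow> i \<le> j \<Longrightarrow> j \<le> n \<Longrightarrow> t i \<le> t j"
proof (induction j)
  case 0 then show ?case by simp
next
  case (Suc j)
  show ?case
  proof (cases "i = Suc j")
    case True then show ?thesis by simp
  next
    case False
    then have "t i \<le> t j" using Suc by simp
    also have "t j \<le> t (Suc j)" using td_step[OF Suc.prems(1)] Suc.prems by simp
    finally show ?thesis .
  qed
qed

lemma td_range: "tagged_div a b n t s \<Longrightarrow> i \<le> n \<Longrightarrow> a \<le> t i \<and> t i \<le> b"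
  using td_mono[of a b n t s 0 i] td_mono[of a b n t s i n] td_ends[of a b n t s] by auto

lemma mesh_ge: "i < n \<Longrightarrow> \<bar>t (Suc i) - t i\<bar> \<le> mesh n t"
proof -
  assume "i < n"
  have "{\<bar>t (Suc i) - t i\<bar> | i. i < n} = (\<lambda>i. \<bar>t (Suc i) - t i\<bar>) ` {..<n}" by auto
  then have fin: "finite (insert 0 {\<bar>t (Suc i) - t i\<bar> | i. i < n})" by simp
  show ?thesis unfolding mesh_def by (rule Max_ge[OF fin]) (use \<open>i < n\<close> in blast)
qed

lemma mesh_le: "(\<And>i. i < n \<Longrightarrow> \<bar>t (Suc i) - t i\<bar> \<le> d) \<Longrightarrow> d \<ge> 0 \<Longrightarrow> mesh n t \<le> d"
proof -
  assume h: "\<And>i. i < n \<Longrightarrow> \<bar>t (Suc i) - t i\<bar> \<le> d" and d: "d \<ge> 0"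
  have "{\<bar>t (Suc i) - t i\<bar> | i. i < n} = (\<lambda>i. \<bar>t (Suc i) - t i\<bar>) ` {..<n}" by auto
  then have fin: "finite (insert 0 {\<bar>t (Suc i) - t i\<bar> | i. i < n})" by simp
  show ?thesis unfolding mesh_def using h d by (subst Max_le_iff[OF fin]) auto
qed

context
  fixes xf :: "real \<Rightarrow> 'x::ab_group_add"
    and t q :: "nat \<Rightarrow> real"
begin

definition lo :: "nat \<Rightarrow> nat \<Rightarrow> real" where "lo i k = max (t i) (q k)"
definition hi :: "nat \<Rightarrow> nat \<Rightarrow> real" where "hi i k = min (t (Suc i)) (q (Suc k))"
definition DD :: "nat \<Rightarrow> nat \<Rightarrow> 'x" where
  "DD i k = (if lo i k \<le> hi i k then xf (hi i k) - xf (lo i k) else 0)"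

lemma DD_nz: "DD i k \<noteq> 0 \<Longrightarrow> lo i k < hi i k"
  unfolding DD_def by (cases "lo i k = hi i k") (auto split: if_splits)

lemma DD_clamp:
  assumes "t i \<le> t (Suc i)" "q k \<le> q (Suc k)"
  shows "DD i k = xf (max (t i) (min (t (Suc i)) (q (Suc k)))) - xf (max (t i) (min (t (Suc i)) (q k)))"
proof (cases "lo i k \<le> hi i k")
  case True
  then have "max (t i) (min (t (Suc i)) (q (Suc k))) = hi i k" "max (t i) (min (t (Suc i)) (q k)) = lo i k"
    using assms unfolding lo_def hi_def by (auto simp: max_def min_def split: if_splits)
  then show ?thesis using True unfolding DD_def by simp
next
  case False
  then have "max (t i) (min (t (Suc i)) (q (Suc k))) = max (t i) (min (t (Suc i)) (q k))"
    using assms unfolding lo_def hi_def by (auto simp: max_def min_def split: if_splits)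
  then show ?thesis using False unfolding DD_def by simp
qed

lemma DD_clamp':
  assumes "t i \<le> t (Suc i)" "q k \<le> q (Suc k)"
  shows "DD i k = xf (max (q k) (min (q (Suc k)) (t (Suc i)))) - xf (max (q k) (min (q (Suc k)) (t i)))"
proof (cases "lo i k \<le> hi i k")
  case True
  then have "max (q k) (min (q (Suc k)) (t (Suc i))) = hi i k" "max (q k) (min (q (Suc k)) (t i)) = lo i k"
    using assms unfolding lo_def hi_def by (auto simp: max_def min_def split: if_splits)
  then show ?thesis using True unfolding DD_def by simp
next
  case False
  then have "max (q k) (min (q (Suc k)) (t (Suc i))) = max (q k) (min (q (Suc k)) (t i))"
    using assms unfolding lo_def hi_def by (auto simp: max_def min_def split: if_splits)
  then show ?thesis using False unfolding DD_def by simp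
qed

lemma DD_tele1:
  assumes P: "tagged_div a b n t s" and Q: "tagged_div a b m q \<sigma>" and i: "i < n"
  shows "(\<Sum>k<m. DD i k) = xf (t (Suc i)) - xf (t i)"
proof -
  let ?F = "\<lambda>k. xf (max (t i) (min (t (Suc i)) (q k)))"
  have "(\<Sum>k<m. DD i k) = (\<Sum>k<m. ?F (Suc k) - ?F k)"
    using DD_clamp td_step[OF P i] td_step[OF Q] by (intro sum.cong) auto
  also have "\<dots> = ?F m - ?F 0" by (rule sum_lessThan_telescope)
  also have "?F m = xf (t (Suc i))"
  proof -
    have "t i \<le> t (Suc i)" "t (Suc i) \<le> b" "q m = b"
      using td_ends[OF Q] td_range[OF P, of "Suc i"] td_step[OF P i] i by auto
    then have "max (t i) (min (t (Suc i)) (q m)) = t (Suc i)" by simp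
    then show ?thesis by simp
  qed
  also have "?F 0 = xf (t i)"
  proof -
    have "t i \<le> t (Suc i)" "a \<le> t i" "q 0 = a"
      using td_ends[OF Q] td_range[OF P, of i] td_step[OF P i] i by auto
    then have "max (t i) (min (t (Suc i)) (q 0)) = t i" by simp
    then show ?thesis by simp
  qed
  finally show ?thesis .
qed

lemma DD_tele2:
  assumes P: "tagged_div a b n t s" and Q: "tagged_div a b m q \<sigma>" and k: "k < m"
  shows "(\<Sum>i<n. DD i k) = xf (q (Suc k)) - xf (q k)"
proof -
  let ?F = "\<lambda>i. xf (max (q k) (min (q (Suc k)) (t i)))"
  have "(\<Sum>i<n. DD i k) = (\<Sum>i<n. ?F (Suc i) - ?F i)"
    using DD_clamp' td_step[OF Q k] td_step[OF P] by (intro sum.cong) auto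
  also have "\<dots> = ?F n - ?F 0" by (rule sum_lessThan_telescope)
  also have "?F n = xf (q (Suc k))"
  proof -
    have "q k \<le> q (Suc k)" "q (Suc k) \<le> b" "t n = b"
      using td_ends[OF P] td_range[OF Q, of "Suc k"] td_step[OF Q k] k by auto
    then have "max (q k) (min (q (Suc k)) (t n)) = q (Suc k)" by simp
    then show ?thesis by simp
  qed
  also have "?F 0 = xf (q k)"
  proof -
    have "q k \<le> q (Suc k)" "a \<le> q k" "t 0 = a"
      using td_ends[OF P] td_range[OF Q, of k] td_step[OF Q k] k by auto
    then have "max (q k) (min (q (Suc k)) (t 0)) = q k" by simp
    then show ?thesis by simp
  qed
  finally show ?thesis .
qed

lemma DD_subset_in_E:
  assumes P: "tagged_div a b n t s" and Q: "tagged_div a b m q \<sigma>"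
    and S: "S \<subseteq> {..<n} \<times> {..<m}"
  shows "(\<Sum>(i,k)\<in>S. DD i k) \<in> insert 0 (Eset xf a b)"
proof -
  define S' where "S' = {(i,k)\<in>S. lo i k < hi i k}"
  have finS: "finite S" using S finite_subset by blast
  have finS': "finite S'" unfolding S'_def by (rule rev_finite_subset[OF finS]) auto
  have "(\<Sum>(i,k)\<in>S. DD i k) = (\<Sum>(i,k)\<in>S'. DD i k)"
    unfolding S'_def by (rule sum.mono_neutral_right[OF finS]) (use DD_nz in fastforce)+
  define J where "J = (\<lambda>(i::nat,k::nat). (lo i k, hi i k))"
  have sep: "hi i k \<le> lo i' k' \<or> hi i' k' \<le> lo i k"
    if h1: "(i,k) \<in> S'" and h2: "(i',k') \<in> S'" and h3: "(i,k) \<noteq> (i',k')" for i k i' k'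
  proof -
    have ik: "i < n" "k < m" "i' < n" "k' < m" using h1 h2 S unfolding S'_def by auto
    consider "i < i'" | "i' < i" | "i = i'" "k < k'" | "i = i'" "k' < k" using h3 by fastforce
    then show ?thesis
    proof cases
      case 1
      have "t (Suc i) \<le> t i'" using td_mono[OF P, of "Suc i" i'] 1 ik by simp
      then show ?thesis unfolding lo_def hi_def by auto
    next
      case 2
      have "t (Suc i') \<le> t i" using td_mono[OF P, of "Suc i'" i] 2 ik by simp
      then show ?thesis unfolding lo_def hi_def by auto
    next
      case 3
      have "q (Suc k) \<le> q k'" using td_mono[OF Q, of "Suc k" k'] 3 ik by simp
      then show ?thesis unfolding lo_def hi_def by auto
    next
      case 4
      have "q (Suc k') \<le> q k" using td_mono[OF Q, of "Suc k'" k] 4 ik by simp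
      then show ?thesis unfolding lo_def hi_def by auto
    qed
  qed
  have inj: "inj_on J S'"
  proof (rule inj_onI)
    fix u v assume u: "u \<in> S'" and v: "v \<in> S'" and e: "J u = J v"
    obtain i k where "u = (i,k)" by (cases u)
    obtain i' k' where "v = (i',k')" by (cases v)
    show "u = v"
    proof (rule ccontr)
      assume "u \<noteq> v"
      then have "hi i k \<le> lo i' k' \<or> hi i' k' \<le> lo i k" using sep u v \<open>u = (i,k)\<close> \<open>v = (i',k')\<close> by blast
      moreover have "lo i k = lo i' k'" "hi i k = hi i' k'" using e \<open>u = (i,k)\<close> \<open>v = (i',k')\<close> unfolding J_def by auto
      moreover have "lo i k < hi i k" using u \<open>u = (i,k)\<close> unfolding S'_def by auto
      ultimately show False by auto
    qed
  qed
  have "(\<Sum>(i,k)\<in>S'. DD i k) = (\<Sum>(\<alpha>,\<beta>)\<in>J ` S'. xf \<beta> - xf \<alpha>)"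
  proof -
    have "(\<Sum>(\<alpha>,\<beta>)\<in>J ` S'. xf \<beta> - xf \<alpha>) = (\<Sum>u\<in>S'. (\<lambda>(\<alpha>,\<beta>). xf \<beta> - xf \<alpha>) (J u))"
      by (rule sum.reindex[OF inj, unfolded comp_def])
    also have "\<dots> = (\<Sum>(i,k)\<in>S'. DD i k)"
      unfolding J_def S'_def DD_def by (intro sum.cong refl) auto
    finally show ?thesis by simp
  qed
  moreover have "(\<Sum>(\<alpha>,\<beta>)\<in>J ` S'. xf \<beta> - xf \<alpha>) \<in> insert 0 (Eset xf a b)"
  proof (rule intervals_in_E)
    show "finite (J ` S')" using finS' by simp
    show "\<forall>(\<alpha>,\<beta>)\<in>J ` S'. a \<le> \<alpha> \<and> \<alpha> < \<beta> \<and> \<beta> \<le> b"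
    proof (intro ballI, clarify)
      fix \<alpha> \<beta> i k assume "(\<alpha>, \<beta>) = J (i, k)" "(i, k) \<in> S'"
      then have e: "\<alpha> = lo i k" "\<beta> = hi i k" "i < n" "k < m" "lo i k < hi i k"
        using S unfolding J_def S'_def by auto
      have "a \<le> t i" "t (Suc i) \<le> b" using td_range[OF P, of i] td_range[OF P, of "Suc i"] e by auto
      then show "a \<le> \<alpha> \<and> \<alpha> < \<beta> \<and> \<beta> \<le> b" using e unfolding lo_def hi_def by auto
    qed
    show "\<forall>(\<alpha>,\<beta>)\<in>J ` S'. \<forall>(\<alpha>',\<beta>')\<in>J ` S'. (\<alpha>,\<beta>) \<noteq> (\<alpha>',\<beta>') \<longrightarrow> \<beta> \<le> \<alpha>' \<or> \<beta>' \<le> \<alpha>"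
    proof -
      have sep2: "\<forall>u\<in>S'. \<forall>v\<in>S'. u \<noteq> v \<longrightarrow> hi (fst u) (snd u) \<le> lo (fst v) (snd v) \<or> hi (fst v) (snd v) \<le> lo (fst u) (snd u)"
        using sep by force
      show ?thesis using sep2 unfolding J_def by fastforce
    qed
  qed
  ultimately show ?thesis using \<open>(\<Sum>(i,k)\<in>S. DD i k) = _\<close> by simp
qed

end

context gauge begin

lemma rlin_sum: "rlin u \<Longrightarrow> u (sum f A) = (\<Sum>x\<in>A. u (f x))"
proof (induction A rule: infinite_finite_induct)
  case (infinite A) then show ?case using rlin_zero by simp
next
  case empty then show ?case using rlin_zero by simp
next
  case (insert x F) then show ?case using rlin_add[of u "f x" "sum f F"] by simp
qed

lemma rlin_i: "rlin u \<Longrightarrow> rlin (\<lambda>x. u (sm \<i> x))"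
  unfolding rlin_def by (simp add: vs.scale_right_distrib rsc_i)

end

context gwcs begin

lemma RS_diff:
  assumes P: "tagged_div a b n t s" and Q: "tagged_div a b m q \<sigma>"
  shows "RS_sum sm g xf n t s - RS_sum sm g xf m q \<sigma> =
    (\<Sum>i<n. \<Sum>k<m. sm (g (s i) - g (\<sigma> k)) (DD xf t q i k))"
proof -
  have "RS_sum sm g xf n t s = (\<Sum>i<n. sm (g (s i)) (\<Sum>k<m. DD xf t q i k))"
    unfolding RS_sum_def by (intro sum.cong refl) (simp add: DD_tele1[OF P Q])
  also have "\<dots> = (\<Sum>i<n. \<Sum>k<m. sm (g (s i)) (DD xf t q i k))" by (simp add: vs.scale_sum_right)
  finally have 1: "RS_sum sm g xf n t s = (\<Sum>i<n. \<Sum>k<m. sm (g (s i)) (DD xf t q i k))" .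
  have "RS_sum sm g xf m q \<sigma> = (\<Sum>k<m. sm (g (\<sigma> k)) (\<Sum>i<n. DD xf t q i k))"
    unfolding RS_sum_def by (intro sum.cong refl) (simp add: DD_tele2[OF P Q])
  also have "\<dots> = (\<Sum>k<m. \<Sum>i<n. sm (g (\<sigma> k)) (DD xf t q i k))" by (simp add: vs.scale_sum_right)
  also have "\<dots> = (\<Sum>i<n. \<Sum>k<m. sm (g (\<sigma> k)) (DD xf t q i k))" by (rule sum.swap)
  finally have 2: "RS_sum sm g xf m q \<sigma> = (\<Sum>i<n. \<Sum>k<m. sm (g (\<sigma> k)) (DD xf t q i k))" .
  show ?thesis unfolding 1 2
    by (simp add: sum_subtractf[symmetric] vs.scale_left_diff_distrib)
qed

lemma abs_bound:
  assumes P: "tagged_div a b n t s" and Q: "tagged_div a b m q \<sigma>"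
    and w: "rlin w" "\<And>x. \<bar>w x\<bar> \<le> p x" and K: "K \<ge> 0" "\<forall>e\<in>E. p e \<le> K"
  shows "(\<Sum>i<n. \<Sum>k<m. \<bar>w (DD xf t q i k)\<bar>) \<le> 2 * K"
proof -
  let ?D = "DD xf t q"
  define I where "I = {..<n} \<times> {..<m}"
  define Sp where "Sp = {u\<in>I. w (?D (fst u) (snd u)) \<ge> 0}"
  define Sn where "Sn = {u\<in>I. w (?D (fst u) (snd u)) < 0}"
  have finI: "finite I" unfolding I_def by simp
  have finp: "finite Sp" "finite Sn" using finI unfolding Sp_def Sn_def by simp_all
  have IU: "I = Sp \<union> Sn" "Sp \<inter> Sn = {}" unfolding Sp_def Sn_def by auto
  have inE: "p (\<Sum>(i,k)\<in>S. ?D i k) \<le> K" if "S \<subseteq> I" for S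
  proof -
    have "(\<Sum>(i,k)\<in>S. ?D i k) \<in> insert 0 E" using DD_subset_in_E[OF P Q] that unfolding I_def by blast
    then show ?thesis using K p_zero by auto
  qed
  have "(\<Sum>i<n. \<Sum>k<m. \<bar>w (?D i k)\<bar>) = (\<Sum>u\<in>I. \<bar>w (?D (fst u) (snd u))\<bar>)"
    unfolding I_def by (simp add: sum.cartesian_product split_def)
  also have "\<dots> = (\<Sum>u\<in>Sp. \<bar>w (?D (fst u) (snd u))\<bar>) + (\<Sum>u\<in>Sn. \<bar>w (?D (fst u) (snd u))\<bar>)"
    unfolding IU(1) by (rule sum.union_disjoint[OF finp IU(2)])
  also have "(\<Sum>u\<in>Sp. \<bar>w (?D (fst u) (snd u))\<bar>) = w (\<Sum>(i,k)\<in>Sp. ?D i k)"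
    unfolding rlin_sum[OF w(1)] Sp_def by (intro sum.cong) (auto simp: split_def)
  also have "(\<Sum>u\<in>Sn. \<bar>w (?D (fst u) (snd u))\<bar>) = - w (\<Sum>(i,k)\<in>Sn. ?D i k)"
    unfolding rlin_sum[OF w(1)] Sn_def by (simp add: sum_negf[symmetric] split_def)
  also have "w (\<Sum>(i,k)\<in>Sp. ?D i k) \<le> K"
    using w(2)[of "\<Sum>(i,k)\<in>Sp. ?D i k"] inE[of Sp] IU by auto
  also have "- w (\<Sum>(i,k)\<in>Sn. ?D i k) \<le> K"
    using w(2)[of "\<Sum>(i,k)\<in>Sn. ?D i k"] inE[of Sn] IU by auto
  finally show ?thesis by simp
qed

lemma main_est:
  assumes P: "tagged_div a b n t s" and Q: "tagged_div a b m q \<sigma>" and eps: "\<epsilon> \<ge> 0"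
    and c: "\<And>i k. i < n \<Longrightarrow> k < m \<Longrightarrow> DD xf t q i k \<noteq> 0 \<Longrightarrow> cmod (c i k) \<le> \<epsilon>"
    and K: "K \<ge> 0" "\<forall>e\<in>E. p e \<le> K"
  shows "p (\<Sum>i<n. \<Sum>k<m. sm (c i k) (DD xf t q i k)) \<le> 4 * \<epsilon> * K"
proof -
  let ?D = "DD xf t q"
  let ?Y = "\<Sum>i<n. \<Sum>k<m. sm (c i k) (?D i k)"
  obtain u where u: "rlin u" "\<And>x. \<bar>u x\<bar> \<le> p x" "u ?Y = p ?Y" using norming[of ?Y] by blast
  define w where "w x = u (sm \<i> x)" for x
  have wl: "rlin w" unfolding w_def by (rule rlin_i[OF u(1)])
  have wb: "\<bar>w x\<bar> \<le> p x" for x unfolding w_def using u(2)[of "sm \<i> x"] p_i by simp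
  have trm: "u (sm (c i k) (?D i k)) \<le> \<epsilon> * \<bar>u (?D i k)\<bar> + \<epsilon> * \<bar>w (?D i k)\<bar>"
    if "i < n" "k < m" for i k
  proof (cases "?D i k = 0")
    case True
    then show ?thesis using rlin_zero[OF u(1)] eps by simp
  next
    case False
    then have ce: "cmod (c i k) \<le> \<epsilon>" using c that by blast
    have "u (sm (c i k) (?D i k)) = Re (c i k) * u (?D i k) + Im (c i k) * w (?D i k)"
      unfolding w_def cx_decomp[of "c i k"] using u(1) by (simp add: rlin_add rlin_rsc)
    also have "\<dots> \<le> \<bar>Re (c i k)\<bar> * \<bar>u (?D i k)\<bar> + \<bar>Im (c i k)\<bar> * \<bar>w (?D i k)\<bar>"
      by (intro add_mono) (simp_all add: abs_mult[symmetric])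
    also have "\<dots> \<le> \<epsilon> * \<bar>u (?D i k)\<bar> + \<epsilon> * \<bar>w (?D i k)\<bar>"
      using ce abs_Re_le_cmod[of "c i k"] abs_Im_le_cmod[of "c i k"]
      by (intro add_mono mult_right_mono) auto
    finally show ?thesis .
  qed
  have "p ?Y = (\<Sum>i<n. \<Sum>k<m. u (sm (c i k) (?D i k)))"
    using u(3) by (simp add: rlin_sum[OF u(1)])
  also have "\<dots> \<le> (\<Sum>i<n. \<Sum>k<m. \<epsilon> * \<bar>u (?D i k)\<bar> + \<epsilon> * \<bar>w (?D i k)\<bar>)"
    using trm by (intro sum_mono) auto
  also have "\<dots> = \<epsilon> * (\<Sum>i<n. \<Sum>k<m. \<bar>u (?D i k)\<bar>) + \<epsilon> * (\<Sum>i<n. \<Sum>k<m. \<bar>w (?D i k)\<bar>)"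
    by (simp add: sum.distrib sum_distrib_left)
  also have "\<dots> \<le> \<epsilon> * (2 * K) + \<epsilon> * (2 * K)"
    using abs_bound[OF P Q u(1) u(2) K] abs_bound[OF P Q wl wb K] eps
    by (intro add_mono mult_left_mono) auto
  finally show ?thesis by (simp add: mult_ac)
qed

lemma RS_cauchy:
  assumes gc: "continuous_on {a..b} g"
  shows "\<exists>\<delta>>0. \<forall>n t s m q \<sigma>. tagged_div a b n t s \<longrightarrow> mesh n t < \<delta> \<longrightarrow>
      tagged_div a b m q \<sigma> \<longrightarrow> mesh m q < \<delta> \<longrightarrow>
      p (RS_sum sm g xf n t s - RS_sum sm g xf m q \<sigma>) < 1"
proof -
  obtain K0 where K0: "\<forall>e\<in>E. p e \<le> K0" using E_bounded by blast
  define K where "K = max K0 0"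
  have K: "K \<ge> 0" "\<forall>e\<in>E. p e \<le> K" using K0 unfolding K_def by auto
  define \<epsilon> where "\<epsilon> = 1 / (4 * (K + 1))"
  have eps: "\<epsilon> > 0" unfolding \<epsilon>_def using K by simp
  have "uniformly_continuous_on {a..b} g" by (rule compact_uniformly_continuous[OF gc compact_Icc])
  then obtain d where d0: "d > 0" and d1: "\<forall>x\<in>{a..b}. \<forall>x'\<in>{a..b}. dist x' x < d \<longrightarrow> dist (g x') (g x) < \<epsilon>"
    unfolding uniformly_continuous_on_def using eps by blast
  have d: "d > 0" "\<And>x x'. x \<in> {a..b} \<Longrightarrow> x' \<in> {a..b} \<Longrightarrow> dist x' x < d \<Longrightarrow> dist (g x') (g x) < \<epsilon>"
    using d0 d1 by auto
  have "\<forall>n t s m q \<sigma>. tagged_div a b n t s \<longrightarrow> mesh n t < d/2 \<longrightarrow>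
      tagged_div a b m q \<sigma> \<longrightarrow> mesh m q < d/2 \<longrightarrow>
      p (RS_sum sm g xf n t s - RS_sum sm g xf m q \<sigma>) < 1"
  proof (intro allI impI)
    fix n t s m q \<sigma>
    assume P: "tagged_div a b n t s" and mP: "mesh n t < d/2" and Q: "tagged_div a b m q \<sigma>" and mQ: "mesh m q < d/2"
    have c: "cmod (g (s i) - g (\<sigma> k)) \<le> \<epsilon>" if ik: "i < n" "k < m" and nz: "DD xf t q i k \<noteq> 0" for i k
    proof -
      have lh: "lo t q i k < hi t q i k" using DD_nz[OF nz] .
      have ts: "t i \<le> s i" "s i \<le> t (Suc i)" using td_tag[OF P ik(1)] by auto
      have qs: "q k \<le> \<sigma> k" "\<sigma> k \<le> q (Suc k)" using td_tag[OF Q ik(2)] by auto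
      have tr: "a \<le> t i" "t (Suc i) \<le> b" using td_range[OF P, of i] td_range[OF P, of "Suc i"] ik by auto
      have qr: "a \<le> q k" "q (Suc k) \<le> b" using td_range[OF Q, of k] td_range[OF Q, of "Suc k"] ik by auto
      have m1: "t (Suc i) - t i < d/2" using mesh_ge[OF ik(1), of t] mP by simp
      have m2: "q (Suc k) - q k < d/2" using mesh_ge[OF ik(2), of q] mQ by simp
      have l1: "t i \<le> lo t q i k" "q k \<le> lo t q i k" unfolding lo_def by simp_all
      have h1: "hi t q i k \<le> t (Suc i)" "hi t q i k \<le> q (Suc k)" unfolding hi_def by simp_all
      have "s i - \<sigma> k < d" using l1 h1 lh ts qs m1 m2 by linarith
      moreover have "\<sigma> k - s i < d" using l1 h1 lh ts qs m1 m2 by linarith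
      ultimately have "\<bar>s i - \<sigma> k\<bar> < d" by (simp add: abs_less_iff)
      moreover have "s i \<in> {a..b}" "\<sigma> k \<in> {a..b}" using ts qs tr qr by auto
      ultimately have "dist (g (s i)) (g (\<sigma> k)) < \<epsilon>" using d(2) by (simp add: dist_real_def)
      then show ?thesis by (simp add: dist_norm)
    qed
    have "p (RS_sum sm g xf n t s - RS_sum sm g xf m q \<sigma>) \<le> 4 * \<epsilon> * K"
      unfolding RS_diff[OF P Q] using c eps K by (intro main_est[OF P Q]) auto
    also have "4 * \<epsilon> * K < 1" unfolding \<epsilon>_def using K by (simp add: field_simps)
    finally show "p (RS_sum sm g xf n t s - RS_sum sm g xf m q \<sigma>) < 1" .
  qed
  then show ?thesis using d by (intro exI[of _ "d/2"]) auto
qed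

end

context wcs begin

lemma RS_cauchy_U:
  assumes gc: "continuous_on {a..b} g" and U: "open U" "0 \<in> U"
  shows "\<exists>\<delta>>0. \<forall>n t s m q \<sigma>. tagged_div a b n t s \<longrightarrow> mesh n t < \<delta> \<longrightarrow>
      tagged_div a b m q \<sigma> \<longrightarrow> mesh m q < \<delta> \<longrightarrow>
      RS_sum sm g xf n t s - RS_sum sm g xf m q \<sigma> \<in> U"
proof -
  obtain V where V: "open V" "0 \<in> V" "V \<subseteq> U" "cconvex sm V" "\<forall>v\<in>V. sm \<i> v \<in> V"
    using good_nbhd[OF U] by blast
  interpret G: gwcs sm V xf a b
    by (intro gwcs.intro gauge.intro gauge_axioms.intro) (use V lctvs_axioms wcs_axioms in auto)
  obtain \<delta> where \<delta>: "\<delta> > 0" "\<forall>n t s m q \<sigma>. tagged_div a b n t s \<longrightarrow> mesh n t < \<delta> \<longrightarrow>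
      tagged_div a b m q \<sigma> \<longrightarrow> mesh m q < \<delta> \<longrightarrow>
      G.p (RS_sum sm g xf n t s - RS_sum sm g xf m q \<sigma>) < 1"
    using G.RS_cauchy[OF gc] by blast
  show ?thesis using \<delta> G.p_less_1 V(3) by (intro exI[of _ \<delta>]) blast
qed

definition ut :: "nat \<Rightarrow> nat \<Rightarrow> real" where "ut j i = a + real i * (b - a) / real (Suc j)"

lemma ut_div: "a \<le> b \<Longrightarrow> tagged_div a b (Suc j) (ut j) (ut j)"
proof -
  assume ab: "a \<le> b"
  have "ut j i \<le> ut j (Suc i)" for i
  proof -
    have "real i * (b - a) \<le> real (Suc i) * (b - a)" using ab by (intro mult_right_mono) auto
    then have "real i * (b - a) / real (Suc j) \<le> real (Suc i) * (b - a) / real (Suc j)"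
      by (intro divide_right_mono) auto
    then show ?thesis unfolding ut_def by simp
  qed
  moreover have "ut j 0 = a" unfolding ut_def by simp
  moreover have "ut j (Suc j) = b" unfolding ut_def by (simp del: of_nat_Suc)
  ultimately show ?thesis unfolding tagged_div_def by simp
qed

lemma ut_mesh: assumes ab: "a \<le> b" shows "mesh (Suc j) (ut j) \<le> (b - a) / real (Suc j)"
proof (rule mesh_le)
  fix i assume "i < Suc j"
  have "ut j (Suc i) - ut j i = (b - a) / real (Suc j)"
    unfolding ut_def by (simp add: distrib_right add_divide_distrib)
  then show "\<bar>ut j (Suc i) - ut j i\<bar> \<le> (b - a) / real (Suc j)" using ab by simp
next
  show "(b - a) / real (Suc j) \<ge> 0" using ab by simp
qed

lemma ut_small: "a \<le> b \<Longrightarrow> \<delta> > 0 \<Longrightarrow> \<exists>N. \<forall>j\<ge>N. mesh (Suc j) (ut j) < \<delta>"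
proof -
  assume ab: "a \<le> b" and d: "\<delta> > 0"
  obtain N :: nat where N: "real N > (b - a) / \<delta>" using reals_Archimedean2 by blast
  have "mesh (Suc j) (ut j) < \<delta>" if "j \<ge> N" for j
  proof -
    have "(b - a) / \<delta> < real (Suc j)" using N that by simp
    then have "(b - a) < \<delta> * real (Suc j)" using d by (simp add: field_simps)
    then have "(b - a) / real (Suc j) < \<delta>" by (simp add: field_simps)
    then show ?thesis using ut_mesh[OF ab, of j] by simp
  qed
  then show ?thesis by blast
qed

lemma RS_exists:
  assumes sc: "seq_complete_tvs TYPE('x)" and ab: "a \<le> b" and gc: "continuous_on {a..b} g"
  shows "\<exists>I. has_RS_integral sm g xf a b I"
proof -
  define R where "R j = RS_sum sm g xf (Suc j) (ut j) (ut j)" for j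
  have "tvs_cauchy R"
    unfolding tvs_cauchy_def
  proof (intro allI impI)
    fix U :: "'x set" assume U: "open U \<and> 0 \<in> U"
    obtain \<delta> where \<delta>: "\<delta> > 0" "\<forall>n t s m q \<sigma>. tagged_div a b n t s \<longrightarrow> mesh n t < \<delta> \<longrightarrow>
      tagged_div a b m q \<sigma> \<longrightarrow> mesh m q < \<delta> \<longrightarrow> RS_sum sm g xf n t s - RS_sum sm g xf m q \<sigma> \<in> U"
      using RS_cauchy_U[OF gc conjunct1[OF U] conjunct2[OF U]] by blast
    obtain N where N: "\<forall>j\<ge>N. mesh (Suc j) (ut j) < \<delta>" using ut_small[OF ab \<delta>(1)] by blast
    show "\<exists>N. \<forall>m\<ge>N. \<forall>n\<ge>N. R m - R n \<in> U"
    proof (intro exI[of _ N] allI impI)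
      fix j j' assume "N \<le> j" "N \<le> j'"
      then have m1: "mesh (Suc j) (ut j) < \<delta>" and m2: "mesh (Suc j') (ut j') < \<delta>" using N by simp_all
      show "R j - R j' \<in> U" unfolding R_def
        by (rule \<delta>(2)[rule_format, OF ut_div[OF ab] m1 ut_div[OF ab] m2])
    qed
  qed
  then obtain I where I: "R \<longlonglongrightarrow> I" using sc unfolding seq_complete_tvs_def by blast
  have "has_RS_integral sm g xf a b I"
    unfolding has_RS_integral_def
  proof (intro allI impI)
    fix U assume U: "open U \<and> I \<in> U"
    define W0 where "W0 = (\<lambda>y. y + I) -` U"
    have W0: "open W0" "0 \<in> W0" unfolding W0_def using U open_preimage[OF cont_translate, of U I] by simp_all
    obtain W where W: "open W" "0 \<in> W" "\<forall>w1\<in>W. \<forall>w2\<in>W. w1 + w2 \<in> W0" using add_nbhd[OF W0] by blast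
    obtain \<delta> where \<delta>: "\<delta> > 0" "\<forall>n t s m q \<sigma>. tagged_div a b n t s \<longrightarrow> mesh n t < \<delta> \<longrightarrow>
      tagged_div a b m q \<sigma> \<longrightarrow> mesh m q < \<delta> \<longrightarrow> RS_sum sm g xf n t s - RS_sum sm g xf m q \<sigma> \<in> W"
      using RS_cauchy_U[OF gc W(1,2)] by blast
    define A where "A = (\<lambda>y. y + (- I)) -` W"
    have A: "open A" "I \<in> A" unfolding A_def using W open_preimage[OF cont_translate, of W "- I"] by simp_all
    have ev1: "eventually (\<lambda>j. R j \<in> A) sequentially" using topological_tendstoD[OF I A] .
    obtain N where N: "\<forall>j\<ge>N. mesh (Suc j) (ut j) < \<delta>" using ut_small[OF ab \<delta>(1)] by blast
    obtain N1 where N1: "\<forall>j\<ge>N1. R j \<in> A" using ev1 unfolding eventually_sequentially by blast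
    define j where "j = max N1 N"
    have j: "R j \<in> A" "mesh (Suc j) (ut j) < \<delta>" using N1 N unfolding j_def by simp_all
    have "RS_sum sm g xf n t s \<in> U" if "tagged_div a b n t s" "mesh n t < \<delta>" for n t s
    proof -
      have "RS_sum sm g xf n t s - R j \<in> W" unfolding R_def
        by (rule \<delta>(2)[rule_format, OF that(1) that(2) ut_div[OF ab] j(2)])
      moreover have "R j - I \<in> W" using j(1) unfolding A_def by simp
      ultimately have "(RS_sum sm g xf n t s - R j) + (R j - I) \<in> W0" using W(3) by blast
      then show ?thesis unfolding W0_def by simp
    qed
    then show "\<exists>\<delta>>0. \<forall>n t s. tagged_div a b n t s \<and> mesh n t < \<delta> \<longrightarrow> RS_sum sm g xf n t s \<in> U"
      using \<delta>(1) by (intro exI[of _ \<delta>]) auto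
  qed
  then show ?thesis by blast
qed

end

theorem corollary1:
  fixes sm :: "complex \<Rightarrow> 'x::{ab_group_add,t2_space} \<Rightarrow> 'x"
    and x :: "real \<Rightarrow> 'x" and a b :: real
  assumes "complex_tvs sm"
    and "locally_convex sm"
    and "seq_complete_tvs TYPE('x)"
    and "a \<le> b"
    and "weakly_compact_semivariation sm x a b"
  shows "\<forall>g::real \<Rightarrow> complex. continuous_on {a..b} g \<longrightarrow> (\<exists>I. has_RS_integral sm g x a b I)"
proof (intro allI impI)
  fix g :: "real \<Rightarrow> complex" assume gc: "continuous_on {a..b} g"
  have L: "lctvs sm" by (rule lctvs.intro[OF assms(1,2)])
  interpret W: wcs sm x a b by (rule wcs.intro[OF L wcs_axioms.intro[OF assms(5)]])
  show "\<exists>I. has_RS_integral sm g x a b I" by (rule W.RS_exists[OF assms(3,4) gc])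
qed


end
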